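(* Consider one of Problems I, II or III. Let $f\in V'(\mathbb{R}^d)$ and let $u\in V(\mathbb{R}^d)$ be a local quasiminimizer of $J_f$ with parameters $(C,c,R)$. Then there is a constant $C'$ depending only on $C$, $c$, $R$ (and $d$) such that for all $a\in\mathbb{R}^d$, $r\in(0,R]$ and $\phi\in V(B_r(a))$, $$\left|\int_{\mathbb{R}^d}\tau(u,\phi)\,dx-\langle f,\phi\rangle\right|\le C' r^{d/2}\left(\int_{\mathbb{R}^d}\tau(\phi)\,dx\right)^{1/2}.$$
   Context: Let $d\geq 2$. Problem I: fix an integer $m\geq 1$; scalar functions; $V(\Omega)=H^m_0(\Omega,\mathbb{R})$, $\tau(u)=\sum_{i\in\{1,\ldots,d\}^m}|\partial_{i_1}\cdots\partial_{i_m}u|^2$. Problem II: $m=1$; $V(\Omega)=H^1_0(\Omega,\mathbb{R}^d)$, $\tau(u)=|\nabla u|^2+c_0(\nabla\cdot u)^2$ with fixed $c_0>0$. Problem III: $m=1$; $V(\Omega)=\{u\in H^1_0(\Omega,\mathbb{R}^d):\nabla\cdot u=0\}$, $\tau(u)=|\nabla u|^2$. $V(\mathbb{R}^d)$ is the corresponding space on $\mathbb{R}^d$ ($H^m(\mathbb{R}^d)$, $H^1(\mathbb{R}^d,\mathbb{R}^d)$, divergence-free $H^1(\mathbb{R}^d,\mathbb{R}^d)$), with dual $V'(\mathbb{R}^d)$ and pairing $\langle\cdot,\cdot\rangle$. $\tau(\cdot,\cdot)$ denotes the symmetric bilinear form with $\tau(u,u)=\tau(u)$. For $f\in V'(\mathbb{R}^d)$,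 $J_f(v)=\int\tau(v)\,dx-2\langle f,v\rangle$. Given $C,c,R>0$, $u\in V(\mathbb{R}^d)$ is a local quasiminimizer of $J_f$ with parameters $(C,c,R)$ if for every $a\in\mathbb{R}^d$, $r\in(0,R]$ and $v\in V(\mathbb{R}^d)$ with $v-u\in V(B_r(a))$ and $\int_{B_r(a)}\tau(v-u)\,dx\le c$ one has $J_f(v)\ge J_f(u)-Cr^d$. *)

theory Defs
  imports "HOL-Analysis.Analysis"
begin

primrec pd :: "'a::euclidean_space list \<Rightarrow> ('a \<Rightarrow> 'b::real_normed_vector) \<Rightarrow> 'a \<Rightarrow> 'b" where
  "pd [] f = f"
| "pd (i # is) f = (\<lambda>x. frechet_derivative (pd is f) (at x) i)"

definition smooth_fn :: "('a::euclidean_space \<Rightarrow> 'b::real_normed_vector) \<Rightarrow> bool" where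
  "smooth_fn f \<longleftrightarrow> (\<forall>is. set is \<subseteq> Basis \<longrightarrow> (\<forall>x. pd is f differentiable (at x)))"

definition test_fun :: "'a::euclidean_space set \<Rightarrow> ('a \<Rightarrow> 'b::real_normed_vector) \<Rightarrow> bool" where
  "test_fun \<Omega> \<psi> \<longleftrightarrow> smooth_fn \<psi> \<and> compact (closure {x. \<psi> x \<noteq> 0}) \<and> closure {x. \<psi> x \<noteq> 0} \<subseteq> \<Omega>"

definition L2 :: "('a::euclidean_space \<Rightarrow> 'b::euclidean_space) \<Rightarrow> bool" where
  "L2 u \<longleftrightarrow> u \<in> borel_measurable lborel \<and> integrable lborel (\<lambda>x. (norm (u x))^2)"

definition weak_deriv :: "'a::euclidean_space list \<Rightarrow> ('a \<Rightarrow> 'b::euclidean_space) \<Rightarrow> ('a \<Rightarrow> 'b) \<Rightarrow> bool" where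
  "weak_deriv is u g \<longleftrightarrow> (\<forall>\<psi>::'a \<Rightarrow> real. test_fun UNIV \<psi> \<longrightarrow>
      integral\<^sup>L lborel (\<lambda>x. pd is \<psi> x *\<^sub>R u x) = (-1) ^ length is *\<^sub>R integral\<^sup>L lborel (\<lambda>x. \<psi> x *\<^sub>R g x))"

definition wD :: "'a::euclidean_space list \<Rightarrow> ('a \<Rightarrow> 'b::euclidean_space) \<Rightarrow> 'a \<Rightarrow> 'b" where
  "wD is u = (SOME g. L2 g \<and> weak_deriv is u g)"

definition sobolev :: "nat \<Rightarrow> ('a::euclidean_space \<Rightarrow> 'b::euclidean_space) \<Rightarrow> bool" where
  "sobolev m u \<longleftrightarrow> L2 u \<and>
     (\<forall>is. set is \<subseteq> Basis \<and> length is \<le> m \<longrightarrow> (\<exists>g. L2 g \<and> weak_deriv is u g))"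

definition sob_norm :: "nat \<Rightarrow> ('a::euclidean_space \<Rightarrow> 'b::euclidean_space) \<Rightarrow> real" where
  "sob_norm m u = sqrt (\<Sum>is\<in>{is. set is \<subseteq> Basis \<and> length is \<le> m}.
                          integral\<^sup>L lborel (\<lambda>x. (norm (wD is u x))^2))"

text \<open>H^m_0(Omega): closure of C_c^infinity(Omega) in H^m, viewed (extension by zero) inside H^m(R^d).\<close>
definition H0 :: "nat \<Rightarrow> 'a::euclidean_space set \<Rightarrow> ('a \<Rightarrow> 'b::euclidean_space) set" where
  "H0 m \<Omega> = {u. sobolev m u \<and> (\<exists>\<psi>::nat \<Rightarrow> 'a \<Rightarrow> 'b. (\<forall>k. test_fun \<Omega> (\<psi> k)) \<and>
                     (\<lambda>k. sob_norm m (\<lambda>x. \<psi> k x - u x)) \<longlonglongrightarrow> 0)}"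

definition wdiv :: "('a::euclidean_space \<Rightarrow> 'a) \<Rightarrow> 'a \<Rightarrow> real" where
  "wdiv u x = (\<Sum>j\<in>Basis. wD [j] u x \<bullet> j)"

definition V_I :: "nat \<Rightarrow> ('a::euclidean_space \<Rightarrow> real) set" where
  "V_I m = {u. sobolev m u}"
definition VB_I :: "nat \<Rightarrow> 'a::euclidean_space \<Rightarrow> real \<Rightarrow> ('a \<Rightarrow> real) set" where
  "VB_I m a r = H0 m (ball a r)"
definition tau_I :: "nat \<Rightarrow> ('a::euclidean_space \<Rightarrow> real) \<Rightarrow> ('a \<Rightarrow> real) \<Rightarrow> 'a \<Rightarrow> real" where
  "tau_I m u v x = (\<Sum>is\<in>{is. set is \<subseteq> Basis \<and> length is = m}. wD is u x * wD is v x)"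

definition V_II :: "('a::euclidean_space \<Rightarrow> 'a) set" where
  "V_II = {u. sobolev 1 u}"
definition VB_II :: "'a::euclidean_space \<Rightarrow> real \<Rightarrow> ('a \<Rightarrow> 'a) set" where
  "VB_II a r = H0 1 (ball a r)"
definition tau_II :: "real \<Rightarrow> ('a::euclidean_space \<Rightarrow> 'a) \<Rightarrow> ('a \<Rightarrow> 'a) \<Rightarrow> 'a \<Rightarrow> real" where
  "tau_II c0 u v x = (\<Sum>j\<in>Basis. wD [j] u x \<bullet> wD [j] v x) + c0 * wdiv u x * wdiv v x"

definition V_III :: "('a::euclidean_space \<Rightarrow> 'a) set" where
  "V_III = {u. sobolev 1 u \<and> (AE x in lborel. wdiv u x = 0)}"
definition VB_III :: "'a::euclidean_space \<Rightarrow> real \<Rightarrow> ('a \<Rightarrow> 'a) set" where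
  "VB_III a r = {u \<in> H0 1 (ball a r). AE x in lborel. wdiv u x = 0}"
definition tau_III :: "('a::euclidean_space \<Rightarrow> 'a) \<Rightarrow> ('a \<Rightarrow> 'a) \<Rightarrow> 'a \<Rightarrow> real" where
  "tau_III u v x = (\<Sum>j\<in>Basis. wD [j] u x \<bullet> wD [j] v x)"

text \<open>Continuous linear functionals on V (w.r.t. the norm nrm); pairing <f,v> = f v.\<close>
definition dual_sp :: "('a \<Rightarrow> 'b::real_vector) set \<Rightarrow> (('a \<Rightarrow> 'b) \<Rightarrow> real) \<Rightarrow> (('a \<Rightarrow> 'b) \<Rightarrow> real) set" where
  "dual_sp V nrm = {f. (\<forall>u\<in>V. \<forall>v\<in>V. \<forall>s t. f (\<lambda>x. s *\<^sub>R u x + t *\<^sub>R v x) = s * f u + t * f v)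
                     \<and> (\<exists>K. \<forall>v\<in>V. \<bar>f v\<bar> \<le> K * nrm v)}"

definition J_f :: "(('a::euclidean_space \<Rightarrow> 'b) \<Rightarrow> ('a \<Rightarrow> 'b) \<Rightarrow> 'a \<Rightarrow> real) \<Rightarrow> (('a \<Rightarrow> 'b) \<Rightarrow> real) \<Rightarrow> ('a \<Rightarrow> 'b) \<Rightarrow> real" where
  "J_f tau f v = integral\<^sup>L lborel (\<lambda>x. tau v v x) - 2 * f v"

definition local_quasimin ::
  "('a::euclidean_space \<Rightarrow> 'b::real_normed_vector) set \<Rightarrow> ('a \<Rightarrow> real \<Rightarrow> ('a \<Rightarrow> 'b) set)
   \<Rightarrow> (('a \<Rightarrow> 'b) \<Rightarrow> ('a \<Rightarrow> 'b) \<Rightarrow> 'a \<Rightarrow> real) \<Rightarrow> (('a \<Rightarrow> 'b) \<Rightarrow> real)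
   \<Rightarrow> real \<Rightarrow> real \<Rightarrow> real \<Rightarrow> ('a \<Rightarrow> 'b) \<Rightarrow> bool" where
  "local_quasimin V VB tau f C c R u \<longleftrightarrow> u \<in> V \<and>
     (\<forall>a r v. 0 < r \<and> r \<le> R \<and> v \<in> V \<and> (\<lambda>x. v x - u x) \<in> VB a r \<and>
        (LINT x:ball a r|lborel. tau (\<lambda>x. v x - u x) (\<lambda>x. v x - u x) x) \<le> c
        \<longrightarrow> J_f tau f v \<ge> J_f tau f u - C * r ^ DIM('a))"

end

theory Submission
  imports Defs "HOL-Computational_Algebra.Polynomial"
begin

lemma polyexp_lim: "((\<lambda>h. poly p (1/h) * exp (-1/h)) \<longlongrightarrow> (0::real)) (at_right 0)"
proof -
  have "((\<lambda>s. poly p s * exp (- s)) \<longlongrightarrow> 0) at_top"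
  proof -
    have "((\<lambda>s. \<Sum>i\<le>degree p. coeff p i * (s ^ i / exp s)) \<longlongrightarrow> (\<Sum>i\<le>degree p. coeff p i * 0)) at_top"
      by (intro tendsto_intros tendsto_power_div_exp_0)
    moreover have "(\<lambda>s. \<Sum>i\<le>degree p. coeff p i * (s ^ i / exp s)) = (\<lambda>s. poly p s * exp (- s))"
    proof
      fix s :: real
      have "poly p s * exp (- s) = (\<Sum>i\<le>degree p. coeff p i * s ^ i) * inverse (exp s)"
        by (simp add: poly_altdef exp_minus)
      also have "\<dots> = (\<Sum>i\<le>degree p. coeff p i * (s ^ i / exp s))"
        by (simp add: sum_distrib_right divide_inverse mult.assoc)
      finally show "(\<Sum>i\<le>degree p. coeff p i * (s ^ i / exp s)) = poly p s * exp (- s)" by simp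
    qed
    ultimately show ?thesis by simp
  qed
  then show ?thesis
    unfolding filterlim_at_right_to_top by (simp add: divide_inverse)
qed

fun PP :: "nat \<Rightarrow> real poly" where
  "PP 0 = 1"
| "PP (Suc n) = [:0,0,1:] * (PP n - pderiv (PP n))"

definition Ed :: "nat \<Rightarrow> real \<Rightarrow> real" where
  "Ed n t = (if t > 0 then poly (PP n) (1/t) * exp (-1/t) else 0)"

lemma Ed_deriv_pos:
  assumes "t > 0"
  shows "((\<lambda>t. poly (PP n) (1/t) * exp (-1/t)) has_real_derivative Ed (Suc n) t) (at t)"
proof -
  have "((\<lambda>t. poly (PP n) (1/t) * exp (-1/t)) has_real_derivative
      poly (pderiv (PP n)) (1/t) * (- 1 / t^2) * exp (-1/t) + poly (PP n) (1/t) * (exp (-1/t) * (1/t^2))) (at t)"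
    using assms
    by (auto intro!: derivative_eq_intros DERIV_chain2[OF poly_DERIV] simp: power2_eq_square field_simps)
  moreover have "poly (pderiv (PP n)) (1/t) * (- 1 / t^2) * exp (-1/t) + poly (PP n) (1/t) * (exp (-1/t) * (1/t^2))
      = Ed (Suc n) t"
    using assms by (simp add: Ed_def algebra_simps power2_eq_square)
  ultimately show ?thesis by simp
qed

lemma Ed_deriv: "(Ed n has_real_derivative Ed (Suc n) t) (at t)"
proof (cases "t > 0")
  case True
  show ?thesis
  proof (rule has_field_derivative_transform_within_open[OF Ed_deriv_pos[OF True] open_greaterThan])
    show "t \<in> {0<..}" using True by simp
    show "\<And>x. x \<in> {0<..} \<Longrightarrow> poly (PP n) (1 / x) * exp (- 1 / x) = Ed n x" by (simp add: Ed_def)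
  qed
next
  case False
  show ?thesis
  proof (cases "t < 0")
    case True
    have "((\<lambda>x. 0) has_real_derivative 0) (at t)" by simp
    then have "(Ed n has_real_derivative 0) (at t)"
    proof (rule has_field_derivative_transform_within_open[OF _ open_lessThan])
      show "t \<in> {..<0}" using True by simp
      show "\<And>x. x \<in> {..<0} \<Longrightarrow> 0 = Ed n x" by (simp add: Ed_def)
    qed
    moreover have "Ed (Suc n) t = 0" using True by (simp add: Ed_def)
    ultimately show ?thesis by simp
  next
    case False
    with \<open>\<not> t > 0\<close> have t0: "t = 0" by simp
    have "((\<lambda>h. (Ed n (0 + h) - Ed n 0) / h) \<longlongrightarrow> 0) (at 0)"
    proof (rule filterlim_split_at_real)
      show "((\<lambda>h. (Ed n (0 + h) - Ed n 0) / h) \<longlongrightarrow> 0) (at_left 0)"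
      proof (rule tendsto_eventually)
        have "eventually (\<lambda>h. h < 0) (at_left (0::real))" unfolding eventually_at_left_field by (rule exI[of _ "-1"]) simp
        then show "eventually (\<lambda>h. (Ed n (0 + h) - Ed n 0) / h = 0) (at_left (0::real))"
          by eventually_elim (simp add: Ed_def)
      qed
      have "((\<lambda>h. poly (pCons 0 (PP n)) (1/h) * exp (-1/h)) \<longlongrightarrow> 0) (at_right 0)"
        by (rule polyexp_lim)
      moreover have "eventually (\<lambda>h. poly (pCons 0 (PP n)) (1/h) * exp (-1/h) = (Ed n (0 + h) - Ed n 0) / h) (at_right 0)"
      proof -
        have "eventually (\<lambda>h. h > 0) (at_right (0::real))" by (rule eventually_at_right_less)
        then show ?thesis
        proof eventually_elim
          fix h :: real assume h: "h > 0"
          have e1: "Ed n (0 + h) - Ed n 0 = poly (PP n) (1/h) * exp (-1/h)" using h by (simp add: Ed_def)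
          have e2: "poly (pCons 0 (PP n)) (1/h) = (1/h) * poly (PP n) (1/h)" by simp
          show "poly (pCons 0 (PP n)) (1/h) * exp (-1/h) = (Ed n (0 + h) - Ed n 0) / h"
            unfolding e1 e2 by simp
        qed
      qed
      ultimately show "((\<lambda>h. (Ed n (0 + h) - Ed n 0) / h) \<longlongrightarrow> 0) (at_right 0)"
        by (rule Lim_transform_eventually)
    qed
    then have "(Ed n has_real_derivative 0) (at 0)"
      by (simp add: DERIV_def)
    moreover have "Ed (Suc n) 0 = 0" by (simp add: Ed_def)
    ultimately show ?thesis using t0 by simp
  qed
qed

lemma Ed0_pos: "t > 0 \<Longrightarrow> Ed 0 t = exp (-1/t)" by (simp add: Ed_def)
lemma Ed0_nonpos: "t \<le> 0 \<Longrightarrow> Ed 0 t = 0" by (simp add: Ed_def)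
lemma Ed0_ge: "0 \<le> Ed 0 t" by (simp add: Ed_def)
lemma Ed0_le: "Ed 0 t \<le> 1" by (simp add: Ed_def)
lemma Ed0_gt: "t > 0 \<Longrightarrow> 0 < Ed 0 t" by (simp add: Ed_def)

lemma Ed0_lim: assumes "s > 0" shows "(\<lambda>n. Ed 0 (real (Suc n) * s)) \<longlonglongrightarrow> 1"
proof -
  have "filterlim (\<lambda>n. s * real (Suc n)) at_top sequentially"
    by (rule filterlim_tendsto_pos_mult_at_top[OF tendsto_const assms])
       (rule filterlim_compose[OF filterlim_real_sequentially filterlim_Suc])
  then have "filterlim (\<lambda>n. real (Suc n) * s) at_top sequentially" by (simp add: mult.commute)
  then have li: "(\<lambda>n. inverse (real (Suc n) * s)) \<longlonglongrightarrow> 0"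
    by (rule tendsto_inverse_0_at_top)
  have "(\<lambda>n. exp (- inverse (real (Suc n) * s))) \<longlonglongrightarrow> exp (- 0)"
    by (rule tendsto_exp[OF tendsto_minus[OF li]])
  moreover have "\<And>n. Ed 0 (real (Suc n) * s) = exp (- inverse (real (Suc n) * s))"
    using assms by (simp add: Ed_def divide_inverse del: of_nat_Suc)
  ultimately show ?thesis by simp
qed

inductive_set Sc :: "('a::euclidean_space \<Rightarrow> real) set" where
  Sc_const: "(\<lambda>x. k) \<in> Sc"
| Sc_atom: "(\<lambda>x. Ed n (c * (x \<bullet> i) + e)) \<in> Sc"
| Sc_add: "F \<in> Sc \<Longrightarrow> G \<in> Sc \<Longrightarrow> (\<lambda>x. F x + G x) \<in> Sc"
| Sc_mult: "F \<in> Sc \<Longrightarrow> G \<in> Sc \<Longrightarrow> (\<lambda>x. F x * G x) \<in> Sc"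

lemma Sc_deriv:
  "F \<in> Sc \<Longrightarrow> \<exists>F'. (\<forall>x. (F has_derivative F' x) (at x)) \<and> (\<forall>j. (\<lambda>x. F' x j) \<in> Sc)"
proof (induction rule: Sc.induct)
  case (Sc_const k)
  show ?case
    by (rule exI[of _ "\<lambda>x h. 0"]) (auto intro: Sc.Sc_const)
next
  case (Sc_atom n c i e)
  have "((\<lambda>x. Ed n (c * (x \<bullet> i) + e)) has_derivative (\<lambda>h. Ed (Suc n) (c * (x \<bullet> i) + e) * (c * (h \<bullet> i)))) (at x)" for x
  proof -
    have inner: "((\<lambda>x. c * (x \<bullet> i) + e) has_derivative (\<lambda>h. c * (h \<bullet> i))) (at x)"
      by (auto intro!: derivative_eq_intros)
    have outer: "(Ed n has_derivative (\<lambda>y. Ed (Suc n) (c * (x \<bullet> i) + e) * y)) (at (c * (x \<bullet> i) + e))"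
      using Ed_deriv[of n "c * (x \<bullet> i) + e"] unfolding has_field_derivative_def by simp
    show ?thesis using has_derivative_compose[OF inner outer] by simp
  qed
  moreover have "(\<lambda>x. Ed (Suc n) (c * (x \<bullet> i) + e) * (c * (j \<bullet> i))) \<in> Sc" for j
    by (intro Sc.Sc_mult Sc.Sc_atom Sc.Sc_const)
  ultimately show ?case
    by (intro exI[of _ "\<lambda>x h. Ed (Suc n) (c * (x \<bullet> i) + e) * (c * (h \<bullet> i))"]) auto
next
  case (Sc_add F G)
  then obtain F' G' where F': "\<forall>x. (F has_derivative F' x) (at x)" "\<forall>j. (\<lambda>x. F' x j) \<in> Sc"
    and G': "\<forall>x. (G has_derivative G' x) (at x)" "\<forall>j. (\<lambda>x. G' x j) \<in> Sc" by blast
  show ?case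
    by (rule exI[of _ "\<lambda>x h. F' x h + G' x h"])
       (use F' G' in \<open>auto intro!: has_derivative_add Sc.Sc_add\<close>)
next
  case (Sc_mult F G)
  then obtain F' G' where F': "\<forall>x. (F has_derivative F' x) (at x)" "\<forall>j. (\<lambda>x. F' x j) \<in> Sc"
    and G': "\<forall>x. (G has_derivative G' x) (at x)" "\<forall>j. (\<lambda>x. G' x j) \<in> Sc" by blast
  show ?case
    by (rule exI[of _ "\<lambda>x h. F x * G' x h + F' x h * G x"])
       (use F' G' Sc_mult.hyps in \<open>auto intro!: has_derivative_mult Sc.Sc_add Sc.Sc_mult\<close>)
qed

lemma Sc_frechet:
  assumes "F \<in> Sc"
  shows "\<forall>x. F differentiable at x" "(\<lambda>x. frechet_derivative F (at x) j) \<in> Sc"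
proof -
  obtain F' where F': "\<forall>x. (F has_derivative F' x) (at x)" "\<forall>j. (\<lambda>x. F' x j) \<in> Sc"
    using Sc_deriv[OF assms] by blast
  show "\<forall>x. F differentiable at x" using F' unfolding differentiable_def by blast
  have "frechet_derivative F (at x) = F' x" for x
    using F'(1) frechet_derivative_at by metis
  then show "(\<lambda>x. frechet_derivative F (at x) j) \<in> Sc" using F'(2) by simp
qed

lemma Sc_pd: "F \<in> Sc \<Longrightarrow> pd is F \<in> Sc"
  by (induction "is") (auto intro: Sc_frechet)

lemma Sc_smooth: "F \<in> Sc \<Longrightarrow> smooth_fn F"
  unfolding smooth_fn_def using Sc_pd Sc_frechet(1) by blast

lemma Sc_prod: "finite S \<Longrightarrow> (\<forall>i\<in>S. f i \<in> Sc) \<Longrightarrow> (\<lambda>x. \<Prod>i\<in>S. f i x) \<in> Sc"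
  by (induction S rule: finite_induct) (auto intro: Sc.intros)

definition bump :: "nat \<Rightarrow> 'a::euclidean_space \<Rightarrow> 'a \<Rightarrow> 'a \<Rightarrow> real" where
  "bump n a b x = (\<Prod>i\<in>Basis. Ed 0 (real (Suc n) * (x \<bullet> i) + (- real (Suc n) * (a \<bullet> i)))
                              * Ed 0 ((- real (Suc n)) * (x \<bullet> i) + real (Suc n) * (b \<bullet> i)))"

lemma bump_Sc: "bump n a b \<in> Sc"
proof -
  have "(\<lambda>x. bump n a b x) \<in> Sc"
    unfolding bump_def by (intro Sc_prod ballI Sc.Sc_mult Sc.Sc_atom) auto
  then show ?thesis by simp
qed

lemma Ed0_eq0: "Ed 0 t = 0 \<longleftrightarrow> t \<le> 0"
  by (simp add: Ed_def not_less)

lemma bump_ne0: "bump n a b x \<noteq> 0 \<longleftrightarrow> x \<in> box a b"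
proof -
  have "bump n a b x = 0 \<longleftrightarrow> (\<exists>i\<in>Basis. x \<bullet> i \<le> a \<bullet> i \<or> b \<bullet> i \<le> x \<bullet> i)"
  proof -
    have e1: "real (Suc n) * (x \<bullet> i) + (- real (Suc n) * (a \<bullet> i)) \<le> 0 \<longleftrightarrow> x \<bullet> i \<le> a \<bullet> i" for i
    proof -
      have "real (Suc n) * (x \<bullet> i) + (- real (Suc n) * (a \<bullet> i)) = real (Suc n) * (x \<bullet> i - a \<bullet> i)"
        by (simp add: algebra_simps)
      then show ?thesis by (simp add: mult_le_0_iff)
    qed
    have e2: "(- real (Suc n)) * (x \<bullet> i) + real (Suc n) * (b \<bullet> i) \<le> 0 \<longleftrightarrow> b \<bullet> i \<le> x \<bullet> i" for i
    proof -
      have "(- real (Suc n)) * (x \<bullet> i) + real (Suc n) * (b \<bullet> i) = real (Suc n) * (b \<bullet> i - x \<bullet> i)"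
        by (simp add: algebra_simps)
      then show ?thesis by (simp add: mult_le_0_iff)
    qed
    show ?thesis unfolding bump_def
      by (simp add: Ed0_eq0 e1 e2 del: of_nat_Suc)
  qed
  then show ?thesis by (auto simp: mem_box not_le)
qed

lemma bump_nonneg: "0 \<le> bump n a b x"
  unfolding bump_def by (intro prod_nonneg ballI mult_nonneg_nonneg Ed0_ge)

lemma bump_le1: "bump n a b x \<le> 1"
  unfolding bump_def
  by (intro prod_le_1 ballI conjI mult_nonneg_nonneg Ed0_ge mult_le_one Ed0_le)

lemma bump_le_ind: "\<bar>bump n a b x\<bar> \<le> indicator (cbox a b) x"
proof (cases "x \<in> box a b")
  case True
  then have "x \<in> cbox a b" using box_subset_cbox by blast
  then show ?thesis using bump_nonneg[of n a b x] bump_le1[of n a b x] by simp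
next
  case False
  then show ?thesis using bump_ne0[of n a b x] by (simp add: indicator_def)
qed

lemma bump_test: "test_fun UNIV (bump n a b)"
proof -
  have "{x. bump n a b x \<noteq> 0} = box a b" using bump_ne0 by blast
  then show ?thesis
    unfolding test_fun_def using Sc_smooth[OF bump_Sc] by (simp add: compact_closure bounded_box)
qed

lemma bump_lim: "(\<lambda>n. bump n a b x) \<longlonglongrightarrow> indicator (box a b) x"
proof (cases "x \<in> box a b")
  case True
  have "(\<lambda>n. bump n a b x) \<longlonglongrightarrow> (\<Prod>i\<in>(Basis::'a set). 1 * 1)"
    unfolding bump_def
  proof (intro tendsto_prod tendsto_mult)
    fix i :: 'a assume i: "i \<in> Basis"
    have ai: "a \<bullet> i < x \<bullet> i" and bi: "x \<bullet> i < b \<bullet> i" using True i by (auto simp: mem_box)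
    have l1: "(\<lambda>n. Ed 0 (real (Suc n) * (x \<bullet> i - a \<bullet> i))) \<longlonglongrightarrow> 1"
      by (rule Ed0_lim) (use ai in simp)
    have l2: "(\<lambda>n. Ed 0 (real (Suc n) * (b \<bullet> i - x \<bullet> i))) \<longlonglongrightarrow> 1"
      by (rule Ed0_lim) (use bi in simp)
    show "(\<lambda>n. Ed 0 (real (Suc n) * (x \<bullet> i) + (- real (Suc n) * (a \<bullet> i)))) \<longlonglongrightarrow> 1"
      using l1 by (simp add: algebra_simps del: of_nat_Suc)
    show "(\<lambda>n. Ed 0 ((- real (Suc n)) * (x \<bullet> i) + real (Suc n) * (b \<bullet> i))) \<longlonglongrightarrow> 1"
      using l2 by (simp add: algebra_simps del: of_nat_Suc)
  qed
  then show ?thesis using True by simp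
next
  case False
  then have "\<And>n. bump n a b x = 0" using bump_ne0 by blast
  then show ?thesis using False by simp
qed

lemma integrable_bound_pw:
  fixes f :: "'a \<Rightarrow> 'b::{banach, second_countable_topology}"
    and g :: "'a \<Rightarrow> 'c::{banach, second_countable_topology}"
  assumes "integrable M f" "\<And>x. norm (g x) \<le> norm (f x)" "g \<in> borel_measurable M"
  shows "integrable M g"
  by (rule Bochner_Integration.integrable_bound[OF assms(1) assms(3)]) (rule AE_I2, rule assms(2))

lemma L2_meas: "L2 u \<Longrightarrow> u \<in> borel_measurable lborel"
  by (simp add: L2_def)

lemma L2_sq_int: "L2 u \<Longrightarrow> integrable lborel (\<lambda>x. (norm (u x))^2)"
  by (simp add: L2_def)

lemma L2_zero: "L2 (\<lambda>x. 0)"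
  by (simp add: L2_def)

lemma sq_sum_le: "(x + y)^2 \<le> 2 * x^2 + 2 * (y::real)^2"
proof -
  have "0 \<le> (x - y)^2" by simp
  then show ?thesis unfolding power2_sum power2_diff by linarith
qed

lemma prod_le_sq_sum: "x * y \<le> x^2 + (y::real)^2"
proof -
  have "0 \<le> (x - y)^2" "0 \<le> x^2" "0 \<le> y^2" by simp_all
  then show ?thesis unfolding power2_diff by linarith
qed

lemma le_one_plus_sq: "(x::real) \<le> 1 + x^2"
  using prod_le_sq_sum[of x 1] by simp

lemma norm_add_sq_le: "(norm (a + b::'b::real_normed_vector))^2 \<le> 2 * (norm a)^2 + 2 * (norm b)^2"
proof -
  have "norm (a + b) \<le> norm a + norm b" by (rule norm_triangle_ineq)
  then have "(norm (a + b))^2 \<le> (norm a + norm b)^2" by (simp add: power_mono)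
  also have "\<dots> \<le> 2 * (norm a)^2 + 2 * (norm b)^2" by (rule sq_sum_le)
  finally show ?thesis .
qed

lemma L2_lin: assumes "L2 u" "L2 w" shows "L2 (\<lambda>x. s *\<^sub>R u x + t *\<^sub>R w x)"
proof -
  have [measurable]: "u \<in> borel_measurable borel" "w \<in> borel_measurable borel"
    using assms by (auto simp: L2_def)
  have "integrable lborel (\<lambda>x. 2 * s^2 * (norm (u x))^2 + 2 * t^2 * (norm (w x))^2)"
    using assms by (auto simp: L2_def)
  moreover have "norm ((norm (s *\<^sub>R u x + t *\<^sub>R w x))^2) \<le> norm (2 * s^2 * (norm (u x))^2 + 2 * t^2 * (norm (w x))^2)" for x
  proof -
    have "(norm (s *\<^sub>R u x + t *\<^sub>R w x))^2 \<le> 2 * (norm (s *\<^sub>R u x))^2 + 2 * (norm (t *\<^sub>R w x))^2"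
      by (rule norm_add_sq_le)
    also have "\<dots> = 2 * s^2 * (norm (u x))^2 + 2 * t^2 * (norm (w x))^2"
      by (simp add: power_mult_distrib)
    finally show ?thesis by simp
  qed
  ultimately have "integrable lborel (\<lambda>x. (norm (s *\<^sub>R u x + t *\<^sub>R w x))^2)"
    by (rule integrable_bound_pw) measurable
  then show ?thesis by (simp add: L2_def)
qed

lemma L2_sum: "finite S \<Longrightarrow> (\<And>i. i \<in> S \<Longrightarrow> L2 (f i)) \<Longrightarrow> L2 (\<lambda>x. \<Sum>i\<in>S. f i x)"
proof (induction S rule: finite_induct)
  case empty then show ?case by (simp add: L2_zero)
next
  case (insert i S)
  have "L2 (\<lambda>x. \<Sum>i\<in>S. f i x)" by (rule insert.IH, rule insert.prems, simp)
  moreover have "L2 (f i)" by (rule insert.prems, simp)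
  ultimately have "L2 (\<lambda>x. 1 *\<^sub>R f i x + 1 *\<^sub>R (\<Sum>i\<in>S. f i x))" by (intro L2_lin)
  moreover have "(\<lambda>x. \<Sum>i\<in>insert i S. f i x) = (\<lambda>x. 1 *\<^sub>R f i x + 1 *\<^sub>R (\<Sum>i\<in>S. f i x))"
    using insert.hyps by simp
  ultimately show ?case by simp
qed

lemma L2_component: assumes "L2 p" shows "L2 (\<lambda>x. p x \<bullet> k)"
proof -
  have [measurable]: "p \<in> borel_measurable borel" using assms by (simp add: L2_def)
  have "integrable lborel (\<lambda>x. (norm k)^2 * (norm (p x))^2)" using assms by (simp add: L2_def)
  moreover have "norm ((norm (p x \<bullet> k))^2) \<le> norm ((norm k)^2 * (norm (p x))^2)" for x
  proof -
    have "\<bar>p x \<bullet> k\<bar> \<le> norm (p x) * norm k" by (rule Cauchy_Schwarz_ineq2)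
    then have "\<bar>p x \<bullet> k\<bar>^2 \<le> (norm (p x) * norm k)^2" by (intro power_mono) auto
    then show ?thesis by (simp add: power_mult_distrib mult.commute)
  qed
  ultimately have "integrable lborel (\<lambda>x. (norm (p x \<bullet> k))^2)"
    by (rule integrable_bound_pw) measurable
  then show ?thesis by (simp add: L2_def)
qed

lemma L2_inner_int: assumes "L2 p" "L2 q" shows "integrable lborel (\<lambda>x. p x \<bullet> q x)"
proof -
  have [measurable]: "p \<in> borel_measurable borel" "q \<in> borel_measurable borel" using assms by (auto simp: L2_def)
  have "integrable lborel (\<lambda>x. (norm (p x))^2 + (norm (q x))^2)" using assms by (auto simp: L2_def)
  moreover have "norm (p x \<bullet> q x) \<le> norm ((norm (p x))^2 + (norm (q x))^2)" for x
  proof -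
    have "\<bar>p x \<bullet> q x\<bar> \<le> norm (p x) * norm (q x)" by (rule Cauchy_Schwarz_ineq2)
    also have "\<dots> \<le> (norm (p x))^2 + (norm (q x))^2" by (rule prod_le_sq_sum)
    finally show ?thesis by simp
  qed
  ultimately show ?thesis
    by (rule integrable_bound_pw) measurable
qed

lemma L2_local:
  assumes "L2 h" "bounded K" "K \<in> sets borel"
  shows "integrable lborel (\<lambda>x. indicator K x *\<^sub>R h x)"
proof -
  have [measurable]: "h \<in> borel_measurable borel" "K \<in> sets borel" using assms by (auto simp: L2_def)
  have "emeasure lborel K < \<infinity>" using emeasure_bounded_finite[OF assms(2)] .
  then have "integrable lborel (indicator K :: 'a \<Rightarrow> real)"
    by (simp add: integrable_indicator_iff)
  then have "integrable lborel (\<lambda>x. indicator K x + (norm (h x))^2 :: real)"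
    using assms(1) by (auto simp: L2_def)
  moreover have "norm (indicator K x *\<^sub>R h x) \<le> norm (indicator K x + (norm (h x))^2 :: real)" for x
  proof (cases "x \<in> K")
    case True
    have "norm (h x) \<le> 1 + (norm (h x))^2" by (rule le_one_plus_sq)
    then show ?thesis using True by simp
  next
    case False then show ?thesis by simp
  qed
  ultimately show ?thesis
    by (rule integrable_bound_pw) measurable
qed

lemma L2_bdd_mult:
  assumes "L2 h" "compact K" "\<psi> \<in> borel_measurable borel" "\<And>x. \<bar>\<psi> x\<bar> \<le> M * indicator K x"
  shows "integrable lborel (\<lambda>x. \<psi> x *\<^sub>R h x)"
proof -
  have [measurable]: "h \<in> borel_measurable borel" "\<psi> \<in> borel_measurable borel" using assms by (auto simp: L2_def)
  have "integrable lborel (\<lambda>x. indicator K x *\<^sub>R h x)"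
    using assms by (intro L2_local) (auto intro: compact_imp_bounded compact_imp_closed borel_closed)
  then have "integrable lborel (\<lambda>x. M *\<^sub>R (indicator K x *\<^sub>R h x))"
    by (rule integrable_scaleR_right)
  moreover have "norm (\<psi> x *\<^sub>R h x) \<le> norm (M *\<^sub>R (indicator K x *\<^sub>R h x))" for x
  proof -
    have "\<bar>\<psi> x\<bar> * norm (h x) \<le> (M * indicator K x) * norm (h x)"
      using assms(4)[of x] by (intro mult_right_mono) auto
    also have "\<dots> \<le> (\<bar>M\<bar> * indicator K x) * norm (h x)"
      by (intro mult_right_mono) auto
    finally show ?thesis by (simp add: abs_mult)
  qed
  ultimately show ?thesis
    by (rule integrable_bound_pw) measurable
qed

lemma pd_zero_open:
  assumes "open U" "\<And>y. y \<in> U \<Longrightarrow> f y = 0" "x \<in> U"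
  shows "pd is f x = 0"
  using assms(3)
proof (induction "is" arbitrary: x)
  case Nil then show ?case using assms(2) by simp
next
  case (Cons i "is")
  have "((\<lambda>y. 0) has_derivative (\<lambda>h. 0)) (at x)" by simp
  then have "(pd is f has_derivative (\<lambda>h. 0)) (at x)"
    by (rule has_derivative_transform_within_open[OF _ assms(1) Cons.prems]) (use Cons.IH in auto)
  then have "frechet_derivative (pd is f) (at x) = (\<lambda>h. 0)"
    by (metis frechet_derivative_at)
  then show ?case by simp
qed

lemma test_pd_cont:
  assumes "test_fun \<Omega> \<psi>" "set is \<subseteq> Basis"
  shows "continuous_on UNIV (pd is \<psi>)"
proof -
  have "\<forall>x. pd is \<psi> differentiable (at x)" using assms by (auto simp: test_fun_def smooth_fn_def)
  then show ?thesis
    by (meson continuous_at_imp_continuous_on differentiable_imp_continuous_within)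
qed

lemma test_pd_zero:
  assumes "test_fun \<Omega> \<psi>" "x \<notin> closure {x. \<psi> x \<noteq> 0}"
  shows "pd is \<psi> x = 0"
proof -
  have o: "open (- closure {x. \<psi> x \<noteq> 0})" by (intro open_Compl closed_closure)
  have z: "\<psi> y = 0" if "y \<in> - closure {x. \<psi> x \<noteq> 0}" for y
  proof (rule ccontr)
    assume "\<psi> y \<noteq> 0"
    then have "y \<in> closure {x. \<psi> x \<noteq> 0}" using closure_subset[of "{x. \<psi> x \<noteq> 0}"] by fast
    then show False using that by simp
  qed
  have x: "x \<in> - closure {x. \<psi> x \<noteq> 0}" using assms(2) by simp
  show ?thesis by (rule pd_zero_open[OF o z x])
qed

lemma test_pd_bound:
  fixes \<psi> :: "'a::euclidean_space \<Rightarrow> real"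
  assumes "test_fun \<Omega> \<psi>" "set is \<subseteq> Basis"
  shows "\<exists>M. \<forall>x. \<bar>pd is \<psi> x\<bar> \<le> M * indicator (closure {x. \<psi> x \<noteq> 0}) x"
proof -
  let ?K = "closure {x. \<psi> x \<noteq> 0}"
  have K: "compact ?K" using assms by (simp add: test_fun_def)
  have "compact (pd is \<psi> ` ?K)"
    using test_pd_cont[OF assms] K by (meson compact_continuous_image continuous_on_subset subset_UNIV)
  then obtain B where B: "\<forall>y \<in> pd is \<psi> ` ?K. norm y \<le> B"
    by (meson compact_imp_bounded bounded_iff)
  have "\<bar>pd is \<psi> x\<bar> \<le> B * indicator ?K x" for x
  proof (cases "x \<in> ?K")
    case True then show ?thesis using B by auto
  next
    case False then show ?thesis using test_pd_zero[OF assms(1) False] by simp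
  qed
  then show ?thesis by blast
qed

lemma test_int:
  fixes \<psi> :: "'a::euclidean_space \<Rightarrow> real"
  assumes "test_fun \<Omega> \<psi>" "set is \<subseteq> Basis" "L2 h"
  shows "integrable lborel (\<lambda>x. pd is \<psi> x *\<^sub>R h x)"
proof -
  obtain M where M: "\<forall>x. \<bar>pd is \<psi> x\<bar> \<le> M * indicator (closure {x. \<psi> x \<noteq> 0}) x"
    using test_pd_bound[OF assms(1,2)] by blast
  show ?thesis
  proof (rule L2_bdd_mult[OF assms(3)])
    show "compact (closure {x. \<psi> x \<noteq> 0})" using assms by (simp add: test_fun_def)
    show "pd is \<psi> \<in> borel_measurable borel"
      using test_pd_cont[OF assms(1,2)] by (rule borel_measurable_continuous_onI)
  qed (use M in auto)
qed

lemma test_int0: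
  fixes \<psi> :: "'a::euclidean_space \<Rightarrow> real"
  assumes "test_fun \<Omega> \<psi>" "L2 h"
  shows "integrable lborel (\<lambda>x. \<psi> x *\<^sub>R h x)"
  using test_int[OF assms(1) _ assms(2), of "[]"] by simp

lemma int_ind_mult:
  fixes f :: "'a \<Rightarrow> real"
  shows "A \<in> sets M \<Longrightarrow> integrable M f \<Longrightarrow> integrable M (\<lambda>x. indicator A x * f x)"
  using integrable_mult_indicator[of A M f] by simp

lemma box_zero_AE:
  fixes h :: "'a::euclidean_space \<Rightarrow> real"
  assumes hm[measurable]: "h \<in> borel_measurable borel"
    and loc: "\<And>a b. integrable lborel (\<lambda>x. indicator (box a b) x * h x)"
    and zero: "\<And>a b. (\<integral>x. indicator (box a b) x * h x \<partial>lborel) = 0"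
  shows "AE x in lborel. h x = 0"
proof -
  have AEN: "AE x in lborel. x \<in> box (- real N *\<^sub>R One) (real N *\<^sub>R One) \<longrightarrow> h x = 0" for N :: nat
  proof -
    define B where "B = box (- real N *\<^sub>R One) (real N *\<^sub>R (One::'a))"
    define hN where "hN x = indicator B x * h x" for x
    have hNm[measurable]: "hN \<in> borel_measurable borel" unfolding hN_def B_def by measurable
    have hNi: "integrable lborel hN" unfolding hN_def B_def by (rule loc)
    have P: "(\<integral>x. indicator A x * hN x \<partial>lborel) = 0" if "A \<in> sets borel" for A
    proof -
      have "Int_stable (range (\<lambda>(a, b). box a b :: 'a set))"
        by (auto simp: Int_stable_def box_Int_box)
      moreover have "range (\<lambda>(a, b). box a b :: 'a set) \<subseteq> Pow UNIV" by auto
      moreover have "A \<in> sigma_sets UNIV (range (\<lambda>(a, b). box a b :: 'a set))"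
        using that unfolding borel_eq_box by simp
      ultimately show ?thesis
      proof (induction rule: sigma_sets_induct_disjoint)
        case (basic A)
        then obtain a b where A: "A = box a b" by auto
        have "(\<lambda>x. indicator A x * hN x) = (\<lambda>x. indicator (A \<inter> B) x * h x)"
          by (auto simp: hN_def indicator_def)
        moreover have "A \<inter> B = box (\<Sum>i\<in>Basis. max (a \<bullet> i) ((- real N *\<^sub>R One) \<bullet> i) *\<^sub>R i)
                                    (\<Sum>i\<in>Basis. min (b \<bullet> i) ((real N *\<^sub>R One) \<bullet> i) *\<^sub>R i)"
          unfolding A B_def by (rule box_Int_box)
        ultimately show ?case using zero by simp
      next
        case empty then show ?case by simp
      next
        case (compl A)
        have [measurable]: "A \<in> sets borel" using compl(1) by (simp add: borel_eq_box)
        have "(\<lambda>x. indicator (UNIV - A) x * hN x) = (\<lambda>x. hN x - indicator A x * hN x)"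
          by (auto simp: indicator_def)
        moreover have "integrable lborel (\<lambda>x. indicator A x * hN x)"
          using hNi by (intro int_ind_mult) auto
        moreover have "(\<integral>x. hN x \<partial>lborel) = 0"
          using zero unfolding hN_def B_def .
        ultimately show ?case using compl(2) hNi by (simp add: Bochner_Integration.integral_diff)
      next
        case (union F)
        have Fm[measurable]: "F i \<in> sets borel" for i using union(2) by (auto simp: borel_eq_box)
        have fin: "(\<integral>x. indicator (\<Union>i<n. F i) x * hN x \<partial>lborel) = 0" for n
        proof (induction n)
          case 0 then show ?case by simp
        next
          case (Suc n)
          have dj: "F i \<inter> F n = {}" if "i < n" for i
            using union(1) that unfolding disjoint_family_on_def by (metis less_irrefl UNIV_I)
          have disj: "(\<Union>i<n. F i) \<inter> F n = {}"
            using dj by blast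
          have "(\<lambda>x. indicator (\<Union>i<Suc n. F i) x * hN x)
              = (\<lambda>x. indicator (\<Union>i<n. F i) x * hN x + indicator (F n) x * hN x)"
          proof
            fix x
            have "(\<Union>i<Suc n. F i) = (\<Union>i<n. F i) \<union> F n" by (auto simp: lessThan_Suc)
            then show "indicator (\<Union>i<Suc n. F i) x * hN x
              = indicator (\<Union>i<n. F i) x * hN x + indicator (F n) x * hN x"
              using disj by (auto simp: indicator_def)
          qed
          moreover have "integrable lborel (\<lambda>x. indicator (\<Union>i<n. F i) x * hN x)"
            using hNi by (intro int_ind_mult) auto
          moreover have "integrable lborel (\<lambda>x. indicator (F n) x * hN x)"
            using hNi by (intro int_ind_mult) auto
          ultimately show ?case using Suc union(3)[of n] by (simp add: Bochner_Integration.integral_add)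
        qed
        have "(\<lambda>n. \<integral>x. indicator (\<Union>i<n. F i) x * hN x \<partial>lborel)
              \<longlonglongrightarrow> (\<integral>x. indicator (\<Union>i. F i) x * hN x \<partial>lborel)"
        proof (rule integral_dominated_convergence[where w="\<lambda>x. norm (hN x)"])
          show "AE x in lborel. (\<lambda>n. indicator (\<Union>i<n. F i) x * hN x) \<longlonglongrightarrow> indicator (\<Union>i. F i) x * hN x"
          proof (rule AE_I2)
            fix x
            show "(\<lambda>n. indicator (\<Union>i<n. F i) x * hN x) \<longlonglongrightarrow> indicator (\<Union>i. F i) x * hN x"
            proof (cases "x \<in> (\<Union>i. F i)")
              case True
              then obtain k where k: "x \<in> F k" by auto
              have "eventually (\<lambda>n. indicator (\<Union>i<n. F i) x * hN x = indicator (\<Union>i. F i) x * hN x) sequentially"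
                using eventually_ge_at_top[of "Suc k"]
                by eventually_elim (use k True in \<open>auto simp: indicator_def\<close>)
              then show ?thesis by (rule tendsto_eventually)
            next
              case False
              then have e: "(\<lambda>n. indicator (\<Union>i<n. F i) x * hN x) = (\<lambda>n. indicator (\<Union>i. F i) x * hN x)"
                by (auto simp: indicator_def)
              show ?thesis unfolding e by (rule tendsto_const)
            qed
          qed
          show "\<And>n. AE x in lborel. norm (indicator (\<Union>i<n. F i) x * hN x) \<le> norm (hN x)"
            by (auto simp: indicator_def)
        qed (use hNi in auto)
        then show ?case using fin by (simp add: LIMSEQ_const_iff)
      qed
    qed
    have "AE x in lborel. hN x = 0"
    proof (rule density_unique_real[where f'="\<lambda>x. 0", simplified])
      show "integrable lborel hN" by (rule hNi)
      fix A :: "'a set" assume "A \<in> sets lborel"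
      then show "(\<integral>x \<in> A. hN x \<partial>lborel) = 0"
        using P by (simp add: set_lebesgue_integral_def)
    qed
    then show ?thesis unfolding hN_def B_def by (rule AE_mp) (auto simp: indicator_def)
  qed
  have "AE x in lborel. \<forall>N. x \<in> box (- real N *\<^sub>R One) (real N *\<^sub>R One) \<longrightarrow> h x = 0"
    unfolding AE_all_countable by (intro allI) (rule AEN)
  then show ?thesis
  proof (rule AE_mp, intro AE_I2 impI)
    fix x :: 'a assume H: "\<forall>N. x \<in> box (- real N *\<^sub>R One) (real N *\<^sub>R One) \<longrightarrow> h x = 0"
    obtain N :: nat where N: "norm x < real N" using reals_Archimedean2 by blast
    have "x \<in> box (- real N *\<^sub>R One) (real N *\<^sub>R One)"
    proof -
      have "\<bar>x \<bullet> i\<bar> < real N" if "i \<in> Basis" for i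
        using Basis_le_norm[OF that, of x] N by linarith
      then have "- real N < x \<bullet> i \<and> x \<bullet> i < real N" if "i \<in> Basis" for i
        using that by (simp add: abs_less_iff) (metis minus_less_iff)
      then show ?thesis by (auto simp: mem_box)
    qed
    then show "h x = 0" using H by blast
  qed
qed

lemma uniq_core:
  fixes h :: "'a::euclidean_space \<Rightarrow> 'b::euclidean_space"
  assumes L: "L2 h" and Z: "\<And>\<psi>::'a \<Rightarrow> real. test_fun UNIV \<psi> \<Longrightarrow> (\<integral>x. \<psi> x *\<^sub>R h x \<partial>lborel) = 0"
  shows "AE x in lborel. h x = 0"
proof -
  have comp: "AE x in lborel. h x \<bullet> k = 0" if k: "k \<in> Basis" for k
  proof (rule box_zero_AE)
    have Lk: "L2 (\<lambda>x. h x \<bullet> k)" using L by (rule L2_component)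
    then show hm: "(\<lambda>x. h x \<bullet> k) \<in> borel_measurable borel" by (simp add: L2_def)
    show loc: "integrable lborel (\<lambda>x. indicator (box a b) x * (h x \<bullet> k))" for a b :: 'a
      using L2_local[OF Lk, of "box a b"] by (simp add: bounded_box)
    fix a b :: 'a
    note hm[measurable]
    have lim: "(\<lambda>n. \<integral>x. bump n a b x * (h x \<bullet> k) \<partial>lborel) \<longlonglongrightarrow> (\<integral>x. indicator (box a b) x * (h x \<bullet> k) \<partial>lborel)"
    proof (rule integral_dominated_convergence[where w="\<lambda>x. norm (indicator (cbox a b) x * (h x \<bullet> k))"])
      show "integrable lborel (\<lambda>x. norm (indicator (cbox a b) x * (h x \<bullet> k)))"
        using L2_local[OF Lk, of "cbox a b"] by (simp add: bounded_cbox)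
      show "(\<lambda>x. bump n a b x * (h x \<bullet> k)) \<in> borel_measurable lborel" for n
      proof -
        have "continuous_on UNIV (bump n a b)"
          using test_pd_cont[OF bump_test, of "[]"] by simp
        then have [measurable]: "bump n a b \<in> borel_measurable borel" by (rule borel_measurable_continuous_onI)
        show ?thesis using hm by measurable
      qed
      show "AE x in lborel. (\<lambda>n. bump n a b x * (h x \<bullet> k)) \<longlonglongrightarrow> indicator (box a b) x * (h x \<bullet> k)"
        by (intro AE_I2 tendsto_mult bump_lim tendsto_const)
      show "\<And>n. AE x in lborel. norm (bump n a b x * (h x \<bullet> k)) \<le> norm (indicator (cbox a b) x * (h x \<bullet> k))"
      proof (intro AE_I2)
        fix n x
        show "norm (bump n a b x * (h x \<bullet> k)) \<le> norm (indicator (cbox a b) x * (h x \<bullet> k))"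
          using bump_le_ind[of n a b x] by (simp add: abs_mult mult_right_mono)
      qed
    qed measurable
    have "(\<integral>x. bump n a b x * (h x \<bullet> k) \<partial>lborel) = 0" for n
    proof -
      have "integrable lborel (\<lambda>x. bump n a b x *\<^sub>R h x)"
        using test_int0[OF bump_test L] .
      then have "(\<integral>x. (bump n a b x *\<^sub>R h x) \<bullet> k \<partial>lborel) = (\<integral>x. bump n a b x *\<^sub>R h x \<partial>lborel) \<bullet> k"
        by (rule integral_inner_left)
      also have "\<dots> = 0" using Z[OF bump_test] by simp
      finally show ?thesis by simp
    qed
    then show "(\<integral>x. indicator (box a b) x * (h x \<bullet> k) \<partial>lborel) = 0"
      using lim by (simp add: LIMSEQ_const_iff)
  qed
  have "AE x in lborel. \<forall>k\<in>Basis. h x \<bullet> k = 0"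
    by (rule AE_finite_allI) (use comp in auto)
  then show ?thesis
    by (rule AE_mp) (auto intro!: AE_I2 simp: euclidean_all_zero_iff)
qed

lemma weak_uniq:
  fixes g1 g2 :: "'a::euclidean_space \<Rightarrow> 'b::euclidean_space"
  assumes "L2 g1" "L2 g2" "weak_deriv is u g1" "weak_deriv is u g2"
  shows "AE x in lborel. g1 x = g2 x"
proof -
  have L: "L2 (\<lambda>x. 1 *\<^sub>R g1 x + (-1) *\<^sub>R g2 x)" using assms(1,2) by (rule L2_lin)
  have "AE x in lborel. 1 *\<^sub>R g1 x + (-1) *\<^sub>R g2 x = 0"
  proof (rule uniq_core[OF L])
    fix \<psi> :: "'a \<Rightarrow> real" assume T: "test_fun UNIV \<psi>"
    have "(-1::real) ^ length is *\<^sub>R (\<integral>x. \<psi> x *\<^sub>R g1 x \<partial>lborel) = (-1) ^ length is *\<^sub>R (\<integral>x. \<psi> x *\<^sub>R g2 x \<partial>lborel)"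
      using assms(3,4) T unfolding weak_deriv_def by metis
    then have e: "(\<integral>x. \<psi> x *\<^sub>R g1 x \<partial>lborel) = (\<integral>x. \<psi> x *\<^sub>R g2 x \<partial>lborel)"
      by simp
    have i1: "integrable lborel (\<lambda>x. \<psi> x *\<^sub>R g1 x)" by (rule test_int0[OF T assms(1)])
    have i2: "integrable lborel (\<lambda>x. \<psi> x *\<^sub>R g2 x)" by (rule test_int0[OF T assms(2)])
    have "(\<lambda>x. \<psi> x *\<^sub>R (1 *\<^sub>R g1 x + (-1) *\<^sub>R g2 x)) = (\<lambda>x. \<psi> x *\<^sub>R g1 x - \<psi> x *\<^sub>R g2 x)"
      by (simp add: algebra_simps)
    then show "(\<integral>x. \<psi> x *\<^sub>R (1 *\<^sub>R g1 x + (-1) *\<^sub>R g2 x) \<partial>lborel) = 0"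
      using e i1 i2 by (simp add: Bochner_Integration.integral_diff)
  qed
  then show ?thesis by (rule AE_mp) (auto intro!: AE_I2)
qed

lemma wD_spec:
  assumes "sobolev m u" "set is \<subseteq> Basis" "length is \<le> m"
  shows "L2 (wD is u) \<and> weak_deriv is u (wD is u)"
proof -
  have "\<exists>g. L2 g \<and> weak_deriv is u g" using assms by (auto simp: sobolev_def)
  then show ?thesis unfolding wD_def by (rule someI_ex)
qed

lemma weak_lin:
  assumes "weak_deriv is u g1" "weak_deriv is w g2" "set is \<subseteq> Basis"
    "L2 u" "L2 w" "L2 g1" "L2 g2"
  shows "weak_deriv is (\<lambda>x. s *\<^sub>R u x + t *\<^sub>R w x) (\<lambda>x. s *\<^sub>R g1 x + t *\<^sub>R g2 x)"
  unfolding weak_deriv_def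
proof (intro allI impI)
  fix \<psi> :: "'a \<Rightarrow> real" assume T: "test_fun UNIV \<psi>"
  have iu: "integrable lborel (\<lambda>x. pd is \<psi> x *\<^sub>R u x)" by (rule test_int[OF T assms(3,4)])
  have iw: "integrable lborel (\<lambda>x. pd is \<psi> x *\<^sub>R w x)" by (rule test_int[OF T assms(3,5)])
  have i1: "integrable lborel (\<lambda>x. \<psi> x *\<^sub>R g1 x)" by (rule test_int0[OF T assms(6)])
  have i2: "integrable lborel (\<lambda>x. \<psi> x *\<^sub>R g2 x)" by (rule test_int0[OF T assms(7)])
  have e1: "(\<integral>x. pd is \<psi> x *\<^sub>R u x \<partial>lborel) = (-1) ^ length is *\<^sub>R (\<integral>x. \<psi> x *\<^sub>R g1 x \<partial>lborel)"
    using assms(1) T unfolding weak_deriv_def by blast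
  have e2: "(\<integral>x. pd is \<psi> x *\<^sub>R w x \<partial>lborel) = (-1) ^ length is *\<^sub>R (\<integral>x. \<psi> x *\<^sub>R g2 x \<partial>lborel)"
    using assms(2) T unfolding weak_deriv_def by blast
  have "(\<integral>x. pd is \<psi> x *\<^sub>R (s *\<^sub>R u x + t *\<^sub>R w x) \<partial>lborel)
      = (\<integral>x. s *\<^sub>R (pd is \<psi> x *\<^sub>R u x) + t *\<^sub>R (pd is \<psi> x *\<^sub>R w x) \<partial>lborel)"
    by (simp add: algebra_simps)
  also have "\<dots> = (\<integral>x. s *\<^sub>R (pd is \<psi> x *\<^sub>R u x) \<partial>lborel) + (\<integral>x. t *\<^sub>R (pd is \<psi> x *\<^sub>R w x) \<partial>lborel)"
    by (rule Bochner_Integration.integral_add; rule integrable_scaleR_right; rule iu iw)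
  also have "\<dots> = s *\<^sub>R (\<integral>x. pd is \<psi> x *\<^sub>R u x \<partial>lborel) + t *\<^sub>R (\<integral>x. pd is \<psi> x *\<^sub>R w x \<partial>lborel)"
    by (simp only: integral_scaleR_right)
  also have "\<dots> = (-1) ^ length is *\<^sub>R (s *\<^sub>R (\<integral>x. \<psi> x *\<^sub>R g1 x \<partial>lborel) + t *\<^sub>R (\<integral>x. \<psi> x *\<^sub>R g2 x \<partial>lborel))"
    unfolding e1 e2 by (simp add: algebra_simps)
  also have "s *\<^sub>R (\<integral>x. \<psi> x *\<^sub>R g1 x \<partial>lborel) + t *\<^sub>R (\<integral>x. \<psi> x *\<^sub>R g2 x \<partial>lborel)
      = (\<integral>x. s *\<^sub>R (\<psi> x *\<^sub>R g1 x) \<partial>lborel) + (\<integral>x. t *\<^sub>R (\<psi> x *\<^sub>R g2 x) \<partial>lborel)"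
    by (simp only: integral_scaleR_right)
  also have "\<dots> = (\<integral>x. s *\<^sub>R (\<psi> x *\<^sub>R g1 x) + t *\<^sub>R (\<psi> x *\<^sub>R g2 x) \<partial>lborel)"
    by (rule Bochner_Integration.integral_add[symmetric]; rule integrable_scaleR_right; rule i1 i2)
  also have "(\<lambda>x. s *\<^sub>R (\<psi> x *\<^sub>R g1 x) + t *\<^sub>R (\<psi> x *\<^sub>R g2 x)) = (\<lambda>x. \<psi> x *\<^sub>R (s *\<^sub>R g1 x + t *\<^sub>R g2 x))"
    by (simp add: algebra_simps)
  finally show "(\<integral>x. pd is \<psi> x *\<^sub>R (s *\<^sub>R u x + t *\<^sub>R w x) \<partial>lborel) =
         (-1) ^ length is *\<^sub>R (\<integral>x. \<psi> x *\<^sub>R (s *\<^sub>R g1 x + t *\<^sub>R g2 x) \<partial>lborel)" .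
qed

lemma weak_scale:
  assumes "weak_deriv is z g"
  shows "weak_deriv is (\<lambda>x. t *\<^sub>R z x) (\<lambda>x. t *\<^sub>R g x)"
  unfolding weak_deriv_def
proof (intro allI impI)
  fix \<psi> :: "'a \<Rightarrow> real" assume T: "test_fun UNIV \<psi>"
  have e: "(\<integral>x. pd is \<psi> x *\<^sub>R z x \<partial>lborel) = (-1) ^ length is *\<^sub>R (\<integral>x. \<psi> x *\<^sub>R g x \<partial>lborel)"
    using assms T unfolding weak_deriv_def by blast
  have "(\<integral>x. pd is \<psi> x *\<^sub>R (t *\<^sub>R z x) \<partial>lborel) = (\<integral>x. t *\<^sub>R (pd is \<psi> x *\<^sub>R z x) \<partial>lborel)"
    by (simp add: algebra_simps)
  also have "\<dots> = t *\<^sub>R (\<integral>x. pd is \<psi> x *\<^sub>R z x \<partial>lborel)" by (rule integral_scaleR_right)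
  also have "\<dots> = (-1) ^ length is *\<^sub>R (t *\<^sub>R (\<integral>x. \<psi> x *\<^sub>R g x \<partial>lborel))" unfolding e by (simp add: algebra_simps)
  also have "t *\<^sub>R (\<integral>x. \<psi> x *\<^sub>R g x \<partial>lborel) = (\<integral>x. t *\<^sub>R (\<psi> x *\<^sub>R g x) \<partial>lborel)"
    by (rule integral_scaleR_right[symmetric])
  also have "(\<lambda>x. t *\<^sub>R (\<psi> x *\<^sub>R g x)) = (\<lambda>x. \<psi> x *\<^sub>R (t *\<^sub>R g x))" by (simp add: algebra_simps)
  finally show "(\<integral>x. pd is \<psi> x *\<^sub>R (t *\<^sub>R z x) \<partial>lborel) = (-1) ^ length is *\<^sub>R (\<integral>x. \<psi> x *\<^sub>R (t *\<^sub>R g x) \<partial>lborel)" .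
qed

lemma sob_L2: "sobolev m u \<Longrightarrow> L2 u" by (simp add: sobolev_def)

lemma sob_lin:
  assumes "sobolev m u" "sobolev m w"
  shows "sobolev m (\<lambda>x. s *\<^sub>R u x + t *\<^sub>R w x)"
  unfolding sobolev_def
proof (intro conjI allI impI)
  show "L2 (\<lambda>x. s *\<^sub>R u x + t *\<^sub>R w x)" using assms by (intro L2_lin sob_L2)
  fix "is" :: "'a list" assume H: "set is \<subseteq> Basis \<and> length is \<le> m"
  have A: "L2 (wD is u) \<and> weak_deriv is u (wD is u)" using wD_spec[OF assms(1)] H by blast
  have B: "L2 (wD is w) \<and> weak_deriv is w (wD is w)" using wD_spec[OF assms(2)] H by blast
  have Lu: "L2 u" and Lw: "L2 w" using assms by (auto intro: sob_L2)
  have "L2 (\<lambda>x. s *\<^sub>R wD is u x + t *\<^sub>R wD is w x)" using A B L2_lin by blast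
  moreover have "weak_deriv is (\<lambda>x. s *\<^sub>R u x + t *\<^sub>R w x) (\<lambda>x. s *\<^sub>R wD is u x + t *\<^sub>R wD is w x)"
    using weak_lin[of "is" u "wD is u" w "wD is w"] A B H Lu Lw by blast
  ultimately show "\<exists>g. L2 g \<and> weak_deriv is (\<lambda>x. s *\<^sub>R u x + t *\<^sub>R w x) g" by blast
qed

lemma wD_lin:
  assumes "sobolev m u" "sobolev m w" "set is \<subseteq> Basis" "length is \<le> m"
  shows "AE x in lborel. wD is (\<lambda>x. s *\<^sub>R u x + t *\<^sub>R w x) x = s *\<^sub>R wD is u x + t *\<^sub>R wD is w x"
proof -
  have A: "L2 (wD is u) \<and> weak_deriv is u (wD is u)" using wD_spec[OF assms(1,3,4)] .
  have B: "L2 (wD is w) \<and> weak_deriv is w (wD is w)" using wD_spec[OF assms(2,3,4)] .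
  have V: "L2 (wD is (\<lambda>x. s *\<^sub>R u x + t *\<^sub>R w x)) \<and> weak_deriv is (\<lambda>x. s *\<^sub>R u x + t *\<^sub>R w x) (wD is (\<lambda>x. s *\<^sub>R u x + t *\<^sub>R w x))"
    using wD_spec[OF sob_lin[OF assms(1,2)] assms(3,4)] .
  have "L2 (\<lambda>x. s *\<^sub>R wD is u x + t *\<^sub>R wD is w x)" using A B by (intro L2_lin) auto
  moreover have "weak_deriv is (\<lambda>x. s *\<^sub>R u x + t *\<^sub>R w x) (\<lambda>x. s *\<^sub>R wD is u x + t *\<^sub>R wD is w x)"
    using weak_lin[of "is" u "wD is u" w "wD is w"] A B assms sob_L2 by blast
  ultimately show ?thesis using V weak_uniq by blast
qed

lemma sob_norm_nonneg: "0 \<le> sob_norm m z"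
  unfolding sob_norm_def by (intro real_sqrt_ge_zero sum_nonneg Bochner_Integration.integral_nonneg) auto

lemma int_sq_nonneg: "0 \<le> (\<integral>x. (norm (g x))^2 \<partial>lborel)"
  by (intro Bochner_Integration.integral_nonneg) auto

lemma wD_scale_int:
  fixes z :: "'a::euclidean_space \<Rightarrow> 'b::euclidean_space"
  assumes "set is \<subseteq> Basis"
  shows "(\<integral>x. (norm (wD is (\<lambda>x. t *\<^sub>R z x) x))^2 \<partial>lborel) \<le> (max 1 \<bar>t\<bar>)^2 * (\<integral>x. (norm (wD is z x))^2 \<partial>lborel)"
proof -
  let ?I = "\<integral>x. (norm (wD is z x))^2 \<partial>lborel"
  have I0: "0 \<le> ?I" by (rule int_sq_nonneg)
  have M1: "1 \<le> (max 1 \<bar>t\<bar>)^2" by (simp add: le_max_iff_disj)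
  have Mt: "t^2 \<le> (max 1 \<bar>t\<bar>)^2"
    by (metis abs_ge_zero max.cobounded2 power2_abs power_mono)
  show ?thesis
  proof (cases "\<exists>g. L2 g \<and> weak_deriv is z g")
    case True
    then have A: "L2 (wD is z) \<and> weak_deriv is z (wD is z)" unfolding wD_def by (rule someI_ex)
    have L: "L2 (\<lambda>x. t *\<^sub>R wD is z x)" using A L2_lin[of "wD is z" "wD is z" 0 t] by simp
    have W: "weak_deriv is (\<lambda>x. t *\<^sub>R z x) (\<lambda>x. t *\<^sub>R wD is z x)" using A by (intro weak_scale) auto
    then have "\<exists>g. L2 g \<and> weak_deriv is (\<lambda>x. t *\<^sub>R z x) g" using L by blast
    then have B: "L2 (wD is (\<lambda>x. t *\<^sub>R z x)) \<and> weak_deriv is (\<lambda>x. t *\<^sub>R z x) (wD is (\<lambda>x. t *\<^sub>R z x))"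
      unfolding wD_def by (rule someI_ex)
    have ae: "AE x in lborel. wD is (\<lambda>x. t *\<^sub>R z x) x = t *\<^sub>R wD is z x"
      using weak_uniq[of "wD is (\<lambda>x. t *\<^sub>R z x)" "\<lambda>x. t *\<^sub>R wD is z x" "is" "\<lambda>x. t *\<^sub>R z x"] B L W by blast
    have m1[measurable]: "wD is (\<lambda>x. t *\<^sub>R z x) \<in> borel_measurable borel" using B by (simp add: L2_def)
    have m2[measurable]: "wD is z \<in> borel_measurable borel" using A by (simp add: L2_def)
    have "(\<integral>x. (norm (wD is (\<lambda>x. t *\<^sub>R z x) x))^2 \<partial>lborel) = (\<integral>x. (norm (t *\<^sub>R wD is z x))^2 \<partial>lborel)"
      by (rule integral_cong_AE) (measurable, measurable, rule AE_mp[OF ae], rule AE_I2, simp)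
    also have "\<dots> = (\<integral>x. t^2 * (norm (wD is z x))^2 \<partial>lborel)" by (simp add: power_mult_distrib)
    also have "\<dots> = t^2 * ?I" by simp
    also have "\<dots> \<le> (max 1 \<bar>t\<bar>)^2 * ?I" using Mt I0 by (rule mult_right_mono)
    finally show ?thesis .
  next
    case False
    show ?thesis
    proof (cases "t = 0")
      case True
      have W: "weak_deriv is (\<lambda>x. t *\<^sub>R z x) (\<lambda>x. 0)" using True by (simp add: weak_deriv_def)
      then have "\<exists>g. L2 g \<and> weak_deriv is (\<lambda>x. t *\<^sub>R z x) g" using L2_zero by blast
      then have B: "L2 (wD is (\<lambda>x. t *\<^sub>R z x)) \<and> weak_deriv is (\<lambda>x. t *\<^sub>R z x) (wD is (\<lambda>x. t *\<^sub>R z x))"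
        unfolding wD_def by (rule someI_ex)
      have ae: "AE x in lborel. wD is (\<lambda>x. t *\<^sub>R z x) x = 0"
        using weak_uniq[of "wD is (\<lambda>x. t *\<^sub>R z x)" "\<lambda>x. 0" "is" "\<lambda>x. t *\<^sub>R z x"] B W L2_zero by blast
      have m1[measurable]: "wD is (\<lambda>x. t *\<^sub>R z x) \<in> borel_measurable borel" using B by (simp add: L2_def)
      have "(\<integral>x. (norm (wD is (\<lambda>x. t *\<^sub>R z x) x))^2 \<partial>lborel) = integral\<^sup>L (lborel::'a measure) (\<lambda>x. 0)"
        by (rule integral_cong_AE) (measurable, measurable, rule AE_mp[OF ae], rule AE_I2, simp)
      also have "\<dots> \<le> (max 1 \<bar>t\<bar>)^2 * ?I" using I0 by simp
      finally show ?thesis .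
    next
      case t0: False
      have "\<not> (\<exists>g. L2 g \<and> weak_deriv is (\<lambda>x. t *\<^sub>R z x) g)"
      proof
        assume "\<exists>g. L2 g \<and> weak_deriv is (\<lambda>x. t *\<^sub>R z x) g"
        then obtain g where g: "L2 g" "weak_deriv is (\<lambda>x. t *\<^sub>R z x) g" by blast
        have "weak_deriv is (\<lambda>x. (1/t) *\<^sub>R (t *\<^sub>R z x)) (\<lambda>x. (1/t) *\<^sub>R g x)" using g(2) by (rule weak_scale)
        then have "weak_deriv is z (\<lambda>x. (1/t) *\<^sub>R g x)" using t0 by simp
        moreover have "L2 (\<lambda>x. (1/t) *\<^sub>R g x)" using L2_lin[OF g(1) g(1), of 0 "1/t"] by simp
        ultimately show False using False by blast
      qed
      then have "(\<lambda>g. L2 g \<and> weak_deriv is (\<lambda>x. t *\<^sub>R z x) g) = (\<lambda>g. L2 g \<and> weak_deriv is z g)"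
        using False by blast
      then have "wD is (\<lambda>x. t *\<^sub>R z x) = wD is z" unfolding wD_def by simp
      then show ?thesis using mult_right_mono[OF M1 I0] by simp
    qed
  qed
qed

lemma sob_norm_scale: "sob_norm m (\<lambda>x. t *\<^sub>R z x) \<le> max 1 \<bar>t\<bar> * sob_norm m z"
proof -
  let ?S = "{is. set is \<subseteq> (Basis::'a set) \<and> length is \<le> m}"
  have "(\<Sum>is\<in>?S. \<integral>x. (norm (wD is (\<lambda>x. t *\<^sub>R z x) x))^2 \<partial>lborel)
      \<le> (\<Sum>is\<in>?S. (max 1 \<bar>t\<bar>)^2 * (\<integral>x. (norm (wD is z x))^2 \<partial>lborel))"
    by (intro sum_mono wD_scale_int) auto
  also have "\<dots> = (max 1 \<bar>t\<bar>)^2 * (\<Sum>is\<in>?S. \<integral>x. (norm (wD is z x))^2 \<partial>lborel)"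
    by (simp add: sum_distrib_left)
  finally have "sqrt (\<Sum>is\<in>?S. \<integral>x. (norm (wD is (\<lambda>x. t *\<^sub>R z x) x))^2 \<partial>lborel)
      \<le> sqrt ((max 1 \<bar>t\<bar>)^2 * (\<Sum>is\<in>?S. \<integral>x. (norm (wD is z x))^2 \<partial>lborel))"
    by (rule real_sqrt_le_mono)
  also have "\<dots> = max 1 \<bar>t\<bar> * sqrt (\<Sum>is\<in>?S. \<integral>x. (norm (wD is z x))^2 \<partial>lborel)"
    by (simp add: real_sqrt_mult)
  finally show ?thesis unfolding sob_norm_def .
qed

lemma frechet_scale:
  assumes "f differentiable at x"
  shows "frechet_derivative (\<lambda>x. t *\<^sub>R f x) (at x) = (\<lambda>h. t *\<^sub>R frechet_derivative f (at x) h)"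
proof -
  have "(f has_derivative frechet_derivative f (at x)) (at x)" using assms by (simp add: frechet_derivative_works)
  then have "((\<lambda>x. t *\<^sub>R f x) has_derivative (\<lambda>h. t *\<^sub>R frechet_derivative f (at x) h)) (at x)"
    by (rule has_derivative_scaleR_right)
  then show ?thesis by (metis frechet_derivative_at)
qed

lemma pd_scale:
  assumes "smooth_fn \<psi>" "set is \<subseteq> Basis"
  shows "pd is (\<lambda>x. t *\<^sub>R \<psi> x) = (\<lambda>x. t *\<^sub>R pd is \<psi> x)"
  using assms(2)
proof (induction "is")
  case Nil then show ?case by simp
next
  case (Cons i "is")
  then have IH: "pd is (\<lambda>x. t *\<^sub>R \<psi> x) = (\<lambda>x. t *\<^sub>R pd is \<psi> x)" by simp
  have D: "pd is \<psi> differentiable at x" for x using assms(1) Cons.prems by (auto simp: smooth_fn_def)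
  show ?case by (simp add: IH frechet_scale[OF D])
qed

lemma test_scale:
  assumes "test_fun \<Omega> \<psi>"
  shows "test_fun \<Omega> (\<lambda>x. t *\<^sub>R \<psi> x)"
proof -
  have S: "smooth_fn \<psi>" using assms by (simp add: test_fun_def)
  have "smooth_fn (\<lambda>x. t *\<^sub>R \<psi> x)"
    unfolding smooth_fn_def
  proof (intro allI impI)
    fix "is" :: "'a list" and x assume H: "set is \<subseteq> Basis"
    have "pd is \<psi> differentiable at x" using S H by (simp add: smooth_fn_def)
    then have "(\<lambda>x. t *\<^sub>R pd is \<psi> x) differentiable at x"
      unfolding differentiable_def by (auto intro: has_derivative_scaleR_right)
    then show "pd is (\<lambda>x. t *\<^sub>R \<psi> x) differentiable at x" by (simp add: pd_scale[OF S H])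
  qed
  moreover have sub: "{x. t *\<^sub>R \<psi> x \<noteq> 0} \<subseteq> {x. \<psi> x \<noteq> 0}" by auto
  moreover have "bounded {x. \<psi> x \<noteq> 0}" using assms by (simp add: test_fun_def)
  then have "compact (closure {x. t *\<^sub>R \<psi> x \<noteq> 0})" using sub by (simp add: bounded_subset)
  moreover have "closure {x. t *\<^sub>R \<psi> x \<noteq> 0} \<subseteq> \<Omega>"
    using closure_mono[OF sub] assms by (auto simp: test_fun_def)
  ultimately show ?thesis by (simp add: test_fun_def)
qed

lemma H0_scale:
  assumes "\<phi> \<in> H0 m \<Omega>"
  shows "(\<lambda>x. t *\<^sub>R \<phi> x) \<in> H0 m \<Omega>"
proof -
  have sob: "sobolev m \<phi>" using assms by (simp add: H0_def)
  obtain \<psi> where \<psi>: "\<forall>k. test_fun \<Omega> (\<psi> k)" "(\<lambda>k. sob_norm m (\<lambda>x. \<psi> k x - \<phi> x)) \<longlonglongrightarrow> 0"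
    using assms by (auto simp: H0_def)
  have "sobolev m (\<lambda>x. 0 *\<^sub>R \<phi> x + t *\<^sub>R \<phi> x)" by (rule sob_lin[OF sob sob])
  then have S: "sobolev m (\<lambda>x. t *\<^sub>R \<phi> x)" by simp
  have T: "\<forall>k. test_fun \<Omega> (\<lambda>x. t *\<^sub>R \<psi> k x)" using \<psi>(1) test_scale by blast
  have "(\<lambda>k. sob_norm m (\<lambda>x. t *\<^sub>R \<psi> k x - t *\<^sub>R \<phi> x)) \<longlonglongrightarrow> 0"
  proof (rule Lim_null_comparison)
    show "\<forall>\<^sub>F k in sequentially. norm (sob_norm m (\<lambda>x. t *\<^sub>R \<psi> k x - t *\<^sub>R \<phi> x))
        \<le> max 1 \<bar>t\<bar> * sob_norm m (\<lambda>x. \<psi> k x - \<phi> x)"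
    proof (intro always_eventually allI)
      fix k
      have "(\<lambda>x. t *\<^sub>R \<psi> k x - t *\<^sub>R \<phi> x) = (\<lambda>x. t *\<^sub>R (\<psi> k x - \<phi> x))" by (simp add: algebra_simps)
      then show "norm (sob_norm m (\<lambda>x. t *\<^sub>R \<psi> k x - t *\<^sub>R \<phi> x)) \<le> max 1 \<bar>t\<bar> * sob_norm m (\<lambda>x. \<psi> k x - \<phi> x)"
        using sob_norm_scale[of m t "\<lambda>x. \<psi> k x - \<phi> x"] sob_norm_nonneg[of m "\<lambda>x. t *\<^sub>R \<psi> k x - t *\<^sub>R \<phi> x"] by simp
    qed
    show "(\<lambda>k. max 1 \<bar>t\<bar> * sob_norm m (\<lambda>x. \<psi> k x - \<phi> x)) \<longlonglongrightarrow> 0"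
      using tendsto_mult_right_zero[OF \<psi>(2)] by simp
  qed
  then have L: "(\<lambda>k. sob_norm m (\<lambda>x. t *\<^sub>R \<psi> k x - t *\<^sub>R \<phi> x)) \<longlonglongrightarrow> 0" .
  show ?thesis unfolding H0_def mem_Collect_eq
    by (intro conjI exI[of _ "\<lambda>k x. t *\<^sub>R \<psi> k x"]) (rule S, rule T, rule L)
qed

lemma wdiv_lin:
  fixes u w :: "'a::euclidean_space \<Rightarrow> 'a"
  assumes "sobolev 1 u" "sobolev 1 w"
  shows "AE x in lborel. wdiv (\<lambda>x. s *\<^sub>R u x + t *\<^sub>R w x) x = s * wdiv u x + t * wdiv w x"
proof -
  have "AE x in lborel. \<forall>j\<in>Basis. wD [j] (\<lambda>x. s *\<^sub>R u x + t *\<^sub>R w x) x = s *\<^sub>R wD [j] u x + t *\<^sub>R wD [j] w x"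
    by (rule AE_finite_allI) (use assms in \<open>auto intro!: wD_lin\<close>)
  then show ?thesis
    by (rule AE_mp) (auto intro!: AE_I2 simp: wdiv_def inner_add_left sum.distrib sum_distrib_left)
qed

lemma L2_wdiv:
  fixes u :: "'a::euclidean_space \<Rightarrow> 'a"
  assumes "sobolev 1 u"
  shows "L2 (wdiv u)"
proof -
  have "L2 (\<lambda>x. \<Sum>j\<in>Basis. wD [j] u x \<bullet> j)"
    by (intro L2_sum L2_component) (use wD_spec[OF assms] in auto)
  then show ?thesis by (simp add: wdiv_def[abs_def])
qed

definition Kc :: "real \<Rightarrow> real \<Rightarrow> real \<Rightarrow> nat \<Rightarrow> real" where
  "Kc C c R D = ((min 1 (sqrt c / R powr (real D / 2)))^2 + C) / (2 * min 1 (sqrt c / R powr (real D / 2)))"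

lemma core_ineq:
  fixes X T C c R r :: real and D :: nat
  assumes C: "C > 0" and c: "c > 0" and R: "R > 0" and r: "0 < r" "r \<le> R" and T: "T \<ge> 0"
    and H: "\<And>t. t^2 * T \<le> c \<Longrightarrow> - (C * r ^ D) \<le> 2 * t * X + t^2 * T"
  shows "\<bar>X\<bar> \<le> Kc C c R D * r powr (real D / 2) * sqrt T"
proof -
  define \<rho> where "\<rho> = r powr (real D / 2)"
  define Rp where "Rp = R powr (real D / 2)"
  define lam where "lam = min 1 (sqrt c / Rp)"
  have \<rho>0: "\<rho> > 0" using r by (simp add: \<rho>_def)
  have Rp0: "Rp > 0" using R by (simp add: Rp_def)
  have \<rho>Rp: "\<rho> \<le> Rp" unfolding \<rho>_def Rp_def using r by (intro powr_mono2) auto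
  have \<rho>sq: "\<rho>^2 = r ^ D"
  proof -
    have "\<rho>^2 = r powr (real D / 2 + real D / 2)" unfolding \<rho>_def power2_eq_square powr_add ..
    also have "\<dots> = r powr (real D)" by simp
    also have "\<dots> = r ^ D" using r by (simp add: powr_realpow)
    finally show ?thesis .
  qed
  have lam0: "lam > 0" using c Rp0 by (simp add: lam_def)
  have lamle: "lam \<le> sqrt c / Rp" by (simp add: lam_def)
  have a_le: "lam * \<rho> \<le> sqrt c"
  proof -
    have "lam * \<rho> \<le> (sqrt c / Rp) * \<rho>" using lamle \<rho>0 by (intro mult_right_mono) auto
    also have "\<dots> = sqrt c * (\<rho> / Rp)" by simp
    also have "\<dots> \<le> sqrt c * 1" using \<rho>Rp Rp0 c by (intro mult_left_mono) auto
    finally show ?thesis by simp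
  qed
  have K: "Kc C c R D = (lam^2 + C) / (2 * lam)" unfolding Kc_def lam_def Rp_def ..
  have Kpos: "0 \<le> (lam^2 + C) / (2 * lam)" using lam0 C by simp
  define a where "a = lam * \<rho>"
  have a0: "a > 0" using lam0 \<rho>0 by (simp add: a_def)
  have asq: "a^2 \<le> c"
  proof -
    have "a^2 \<le> (sqrt c)^2" using a_le a0 unfolding a_def by (intro power_mono) auto
    then show ?thesis using c by simp
  qed
  show ?thesis
  proof (cases "X = 0")
    case True
    have "0 \<le> (lam^2 + C) / (2 * lam) * \<rho> * sqrt T" using Kpos \<rho>0 T by (intro mult_nonneg_nonneg) auto
    then show ?thesis unfolding K \<rho>_def[symmetric] using True by simp
  next
    case Xne: False
    show ?thesis
    proof (cases "T = 0")
      case True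
      define t where "t = - (C * \<rho>^2 + 1) / (2 * X)"
      have h1: "- (C * r ^ D) \<le> 2 * t * X" using H[of t] True c by simp
      have h2: "2 * t * X = - (C * \<rho>^2 + 1)" using Xne by (simp add: t_def)
      from h1 h2 have False unfolding \<rho>sq by linarith
      then show ?thesis ..
    next
      case False
      then have T0: "T > 0" using T by simp
      define s where "s = sqrt T"
      have s0: "s > 0" using T0 by (simp add: s_def)
      have ssq: "s^2 = T" using T by (simp add: s_def)
      define t where "t = (if X > 0 then - a / s else a / s)"
      have tT: "t^2 * T = a^2"
        using s0 ssq T0 by (simp add: t_def power_divide)
      have tX: "2 * t * X = - 2 * a * \<bar>X\<bar> / s"
        using s0 by (auto simp: t_def)
      have "- (C * \<rho>^2) \<le> - 2 * a * \<bar>X\<bar> / s + a^2" using H[of t] tT tX asq \<rho>sq by simp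
      then have "2 * a * \<bar>X\<bar> / s \<le> C * \<rho>^2 + a^2" by simp
      then have "2 * a * \<bar>X\<bar> \<le> (C * \<rho>^2 + a^2) * s" using s0 by (simp add: pos_divide_le_eq)
      then have "\<bar>X\<bar> \<le> (C * \<rho>^2 + a^2) * s / (2 * a)" using a0 by (simp add: pos_le_divide_eq mult.commute)
      also have "(C * \<rho>^2 + a^2) * s / (2 * a) = (lam^2 + C) / (2 * lam) * \<rho> * s"
        using lam0 \<rho>0 unfolding a_def by (simp add: field_simps power2_eq_square)
      finally show ?thesis unfolding K \<rho>_def[symmetric] s_def[symmetric] .
    qed
  qed
qed

lemma gen_quasi:
  fixes tau :: "('a::euclidean_space \<Rightarrow> 'b::real_normed_vector) \<Rightarrow> ('a \<Rightarrow> 'b) \<Rightarrow> 'a \<Rightarrow> real"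
  assumes LQ: "local_quasimin V VB tau f C c R u"
    and \<phi>V: "\<phi> \<in> V" and fd: "f \<in> dual_sp V nrm"
    and r: "0 < r" "r \<le> R"
    and vV: "(\<lambda>x. 1 *\<^sub>R u x + t *\<^sub>R \<phi> x) \<in> V"
    and vB: "(\<lambda>x. (1 *\<^sub>R u x + t *\<^sub>R \<phi> x) - u x) \<in> VB a r"
    and vball: "(LINT x:ball a r|lborel. tau (\<lambda>x. (1 *\<^sub>R u x + t *\<^sub>R \<phi> x) - u x) (\<lambda>x. (1 *\<^sub>R u x + t *\<^sub>R \<phi> x) - u x) x) \<le> t^2 * T"
    and vexp: "integral\<^sup>L lborel (\<lambda>x. tau (\<lambda>x. 1 *\<^sub>R u x + t *\<^sub>R \<phi> x) (\<lambda>x. 1 *\<^sub>R u x + t *\<^sub>R \<phi> x) x)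
               = integral\<^sup>L lborel (\<lambda>x. tau u u x) + 2 * t * B + t^2 * T"
    and tc: "t^2 * T \<le> c"
  shows "- (C * r ^ DIM('a)) \<le> 2 * t * (B - f \<phi>) + t^2 * T"
proof -
  have uV: "u \<in> V" using LQ by (simp add: local_quasimin_def)
  have q: "\<forall>a r v. 0 < r \<and> r \<le> R \<and> v \<in> V \<and> (\<lambda>x. v x - u x) \<in> VB a r \<and>
        (LINT x:ball a r|lborel. tau (\<lambda>x. v x - u x) (\<lambda>x. v x - u x) x) \<le> c
        \<longrightarrow> J_f tau f v \<ge> J_f tau f u - C * r ^ DIM('a)"
    using LQ unfolding local_quasimin_def by (rule conjunct2)
  have J: "J_f tau f (\<lambda>x. 1 *\<^sub>R u x + t *\<^sub>R \<phi> x) \<ge> J_f tau f u - C * r ^ DIM('a)"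
    using q[rule_format, of r "\<lambda>x. 1 *\<^sub>R u x + t *\<^sub>R \<phi> x" a] r vV vB vball tc by linarith
  have fl: "f (\<lambda>x. 1 *\<^sub>R u x + t *\<^sub>R \<phi> x) = 1 * f u + t * f \<phi>"
    using fd uV \<phi>V unfolding dual_sp_def by blast
  show ?thesis using J unfolding J_f_def fl vexp by (simp add: algebra_simps)
qed

lemma schema:
  fixes tau :: "('a::euclidean_space \<Rightarrow> 'b::real_normed_vector) \<Rightarrow> ('a \<Rightarrow> 'b) \<Rightarrow> 'a \<Rightarrow> real"
  assumes LQ: "local_quasimin V VB tau f C c R u"
    and \<phi>V: "\<phi> \<in> V" and fd: "f \<in> dual_sp V nrm"
    and r: "0 < r" "r \<le> R" and pos: "C > 0" "c > 0" "R > 0"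
    and vV: "\<And>t. (\<lambda>x. 1 *\<^sub>R u x + t *\<^sub>R \<phi> x) \<in> V"
    and vB: "\<And>t. (\<lambda>x. (1 *\<^sub>R u x + t *\<^sub>R \<phi> x) - u x) \<in> VB a r"
    and vball: "\<And>t. (LINT x:ball a r|lborel. tau (\<lambda>x. (1 *\<^sub>R u x + t *\<^sub>R \<phi> x) - u x) (\<lambda>x. (1 *\<^sub>R u x + t *\<^sub>R \<phi> x) - u x) x)
          \<le> t^2 * integral\<^sup>L lborel (\<lambda>x. tau \<phi> \<phi> x)"
    and vexp: "\<And>t. integral\<^sup>L lborel (\<lambda>x. tau (\<lambda>x. 1 *\<^sub>R u x + t *\<^sub>R \<phi> x) (\<lambda>x. 1 *\<^sub>R u x + t *\<^sub>R \<phi> x) x)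
               = integral\<^sup>L lborel (\<lambda>x. tau u u x) + 2 * t * integral\<^sup>L lborel (\<lambda>x. tau u \<phi> x)
                 + t^2 * integral\<^sup>L lborel (\<lambda>x. tau \<phi> \<phi> x)"
    and T: "0 \<le> integral\<^sup>L lborel (\<lambda>x. tau \<phi> \<phi> x)"
  shows "\<bar>integral\<^sup>L lborel (\<lambda>x. tau u \<phi> x) - f \<phi>\<bar>
          \<le> Kc C c R DIM('a) * r powr (real DIM('a) / 2) * sqrt (integral\<^sup>L lborel (\<lambda>x. tau \<phi> \<phi> x))"
proof (rule core_ineq[OF pos r T])
  fix t :: real assume "t^2 * integral\<^sup>L lborel (\<lambda>x. tau \<phi> \<phi> x) \<le> c"
  then show "- (C * r ^ DIM('a)) \<le> 2 * t * (integral\<^sup>L lborel (\<lambda>x. tau u \<phi> x) - f \<phi>) + t^2 * integral\<^sup>L lborel (\<lambda>x. tau \<phi> \<phi> x)"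
    by (rule gen_quasi[OF LQ \<phi>V fd r vV vB vball vexp])
qed

lemma vfacts:
  fixes tau :: "('a::euclidean_space \<Rightarrow> 'b::euclidean_space) \<Rightarrow> ('a \<Rightarrow> 'b) \<Rightarrow> 'a \<Rightarrow> real"
  assumes int: "\<And>u w. sobolev m u \<Longrightarrow> sobolev m w \<Longrightarrow> integrable lborel (\<lambda>x. tau u w x)"
    and lin: "\<And>u w s t. sobolev m u \<Longrightarrow> sobolev m w \<Longrightarrow> AE x in lborel.
       tau (\<lambda>x. s *\<^sub>R u x + t *\<^sub>R w x) (\<lambda>x. s *\<^sub>R u x + t *\<^sub>R w x) x
       = s^2 * tau u u x + 2 * s * t * tau u w x + t^2 * tau w w x"
    and nn: "\<And>u x. sobolev m u \<Longrightarrow> 0 \<le> tau u u x"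
    and su: "sobolev m u" and s\<phi>: "sobolev m \<phi>"
  shows "integral\<^sup>L lborel (\<lambda>x. tau (\<lambda>x. 1 *\<^sub>R u x + t *\<^sub>R \<phi> x) (\<lambda>x. 1 *\<^sub>R u x + t *\<^sub>R \<phi> x) x)
               = integral\<^sup>L lborel (\<lambda>x. tau u u x) + 2 * t * integral\<^sup>L lborel (\<lambda>x. tau u \<phi> x)
                 + t^2 * integral\<^sup>L lborel (\<lambda>x. tau \<phi> \<phi> x)" (is ?E)
    and "A \<in> sets borel \<Longrightarrow> (LINT x:A|lborel. tau (\<lambda>x. (1 *\<^sub>R u x + t *\<^sub>R \<phi> x) - u x) (\<lambda>x. (1 *\<^sub>R u x + t *\<^sub>R \<phi> x) - u x) x)
          \<le> t^2 * integral\<^sup>L lborel (\<lambda>x. tau \<phi> \<phi> x)"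
    and "0 \<le> integral\<^sup>L lborel (\<lambda>x. tau \<phi> \<phi> x)"
proof -
  have Iu: "integrable lborel (\<lambda>x. tau u u x)" by (rule int[OF su su])
  have Iu\<phi>: "integrable lborel (\<lambda>x. tau u \<phi> x)" by (rule int[OF su s\<phi>])
  have I\<phi>: "integrable lborel (\<lambda>x. tau \<phi> \<phi> x)" by (rule int[OF s\<phi> s\<phi>])
  show "0 \<le> integral\<^sup>L lborel (\<lambda>x. tau \<phi> \<phi> x)"
    by (rule Bochner_Integration.integral_nonneg) (rule nn[OF s\<phi>])
  have sv: "sobolev m (\<lambda>x. 1 *\<^sub>R u x + t *\<^sub>R \<phi> x)" by (rule sob_lin[OF su s\<phi>])
  have Iv: "integrable lborel (\<lambda>x. tau (\<lambda>x. 1 *\<^sub>R u x + t *\<^sub>R \<phi> x) (\<lambda>x. 1 *\<^sub>R u x + t *\<^sub>R \<phi> x) x)"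
    by (rule int[OF sv sv])
  have "integral\<^sup>L lborel (\<lambda>x. tau (\<lambda>x. 1 *\<^sub>R u x + t *\<^sub>R \<phi> x) (\<lambda>x. 1 *\<^sub>R u x + t *\<^sub>R \<phi> x) x)
      = integral\<^sup>L lborel (\<lambda>x. 1^2 * tau u u x + 2 * 1 * t * tau u \<phi> x + t^2 * tau \<phi> \<phi> x)"
  proof (rule integral_cong_AE)
    show "(\<lambda>x. tau (\<lambda>x. 1 *\<^sub>R u x + t *\<^sub>R \<phi> x) (\<lambda>x. 1 *\<^sub>R u x + t *\<^sub>R \<phi> x) x) \<in> borel_measurable lborel"
      using Iv by (rule borel_measurable_integrable)
    show "(\<lambda>x. 1^2 * tau u u x + 2 * 1 * t * tau u \<phi> x + t^2 * tau \<phi> \<phi> x) \<in> borel_measurable lborel"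
      using Iu Iu\<phi> I\<phi> by (intro borel_measurable_integrable) auto
    show "AE x in lborel. tau (\<lambda>x. 1 *\<^sub>R u x + t *\<^sub>R \<phi> x) (\<lambda>x. 1 *\<^sub>R u x + t *\<^sub>R \<phi> x) x
        = 1^2 * tau u u x + 2 * 1 * t * tau u \<phi> x + t^2 * tau \<phi> \<phi> x"
      by (rule lin[OF su s\<phi>])
  qed
  also have "\<dots> = integral\<^sup>L lborel (\<lambda>x. tau u u x) + 2 * t * integral\<^sup>L lborel (\<lambda>x. tau u \<phi> x)
                 + t^2 * integral\<^sup>L lborel (\<lambda>x. tau \<phi> \<phi> x)"
    using Iu Iu\<phi> I\<phi> by simp
  finally show ?E .
  assume A: "A \<in> sets borel"
  have weq: "(\<lambda>x. (1 *\<^sub>R u x + t *\<^sub>R \<phi> x) - u x) = (\<lambda>x. 0 *\<^sub>R u x + t *\<^sub>R \<phi> x)" by simp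
  have sw: "sobolev m (\<lambda>x. 0 *\<^sub>R u x + t *\<^sub>R \<phi> x)" by (rule sob_lin[OF su s\<phi>])
  have Iw: "integrable lborel (\<lambda>x. tau (\<lambda>x. 0 *\<^sub>R u x + t *\<^sub>R \<phi> x) (\<lambda>x. 0 *\<^sub>R u x + t *\<^sub>R \<phi> x) x)"
    by (rule int[OF sw sw])
  have aew: "AE x in lborel. tau (\<lambda>x. 0 *\<^sub>R u x + t *\<^sub>R \<phi> x) (\<lambda>x. 0 *\<^sub>R u x + t *\<^sub>R \<phi> x) x
        = 0^2 * tau u u x + 2 * 0 * t * tau u \<phi> x + t^2 * tau \<phi> \<phi> x"
    by (rule lin[OF su s\<phi>])
  have "(LINT x:A|lborel. tau (\<lambda>x. 0 *\<^sub>R u x + t *\<^sub>R \<phi> x) (\<lambda>x. 0 *\<^sub>R u x + t *\<^sub>R \<phi> x) x)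
      = (\<integral>x. indicator A x * (t^2 * tau \<phi> \<phi> x) \<partial>lborel)"
    unfolding set_lebesgue_integral_def
  proof (rule integral_cong_AE)
    show "(\<lambda>x. indicator A x *\<^sub>R tau (\<lambda>x. 0 *\<^sub>R u x + t *\<^sub>R \<phi> x) (\<lambda>x. 0 *\<^sub>R u x + t *\<^sub>R \<phi> x) x) \<in> borel_measurable lborel"
      using int_ind_mult[OF _ Iw, of A] A by (intro borel_measurable_integrable) simp
    show "(\<lambda>x. indicator A x * (t^2 * tau \<phi> \<phi> x)) \<in> borel_measurable lborel"
      using int_ind_mult[OF _ integrable_mult_right[OF I\<phi>], of A "t^2"] A by (intro borel_measurable_integrable) simp
    show "AE x in lborel. indicator A x *\<^sub>R tau (\<lambda>x. 0 *\<^sub>R u x + t *\<^sub>R \<phi> x) (\<lambda>x. 0 *\<^sub>R u x + t *\<^sub>R \<phi> x) x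
        = indicator A x * (t^2 * tau \<phi> \<phi> x)"
      using aew by (rule AE_mp) (rule AE_I2, simp)
  qed
  also have "\<dots> \<le> (\<integral>x. t^2 * tau \<phi> \<phi> x \<partial>lborel)"
  proof (rule integral_mono)
    show "integrable lborel (\<lambda>x. indicator A x * (t^2 * tau \<phi> \<phi> x))"
      using int_ind_mult[OF _ integrable_mult_right[OF I\<phi>], of A "t^2"] A by simp
    show "integrable lborel (\<lambda>x. t^2 * tau \<phi> \<phi> x)" using I\<phi> by simp
    fix x
    have "0 \<le> t^2 * tau \<phi> \<phi> x" using nn[OF s\<phi>] by simp
    then show "indicator A x * (t^2 * tau \<phi> \<phi> x) \<le> t^2 * tau \<phi> \<phi> x"
      by (simp add: indicator_def)
  qed
  also have "\<dots> = t^2 * integral\<^sup>L lborel (\<lambda>x. tau \<phi> \<phi> x)" by simp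
  finally show "(LINT x:A|lborel. tau (\<lambda>x. (1 *\<^sub>R u x + t *\<^sub>R \<phi> x) - u x) (\<lambda>x. (1 *\<^sub>R u x + t *\<^sub>R \<phi> x) - u x) x)
          \<le> t^2 * integral\<^sup>L lborel (\<lambda>x. tau \<phi> \<phi> x)" unfolding weq .
qed

section \<open>Problem I\<close>

lemma finite_lists_m: "finite {is. set is \<subseteq> (Basis::'a::euclidean_space set) \<and> length is = m}"
  by (rule finite_lists_length_eq) simp

lemma sum_quad:
  fixes a b :: "'i \<Rightarrow> real"
  shows "(\<Sum>i\<in>S. (s * a i + t * b i) * (s * a i + t * b i))
     = s^2 * (\<Sum>i\<in>S. a i * a i) + 2 * s * t * (\<Sum>i\<in>S. a i * b i) + t^2 * (\<Sum>i\<in>S. b i * b i)"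
proof -
  have "\<And>i. (s * a i + t * b i) * (s * a i + t * b i) = s^2 * (a i * a i) + 2 * s * t * (a i * b i) + t^2 * (b i * b i)"
    by (simp add: power2_eq_square algebra_simps)
  then show ?thesis by (simp add: sum.distrib sum_distrib_left)
qed

lemma tauI_int:
  assumes "sobolev m u" "sobolev m w"
  shows "integrable lborel (\<lambda>x. tau_I m u w x)"
  unfolding tau_I_def
proof (rule Bochner_Integration.integrable_sum)
  fix "is" :: "'a list" assume "is \<in> {is. set is \<subseteq> Basis \<and> length is = m}"
  then have H: "set is \<subseteq> Basis" "length is \<le> m" by auto
  have "L2 (wD is u)" "L2 (wD is w)" using wD_spec[OF assms(1) H] wD_spec[OF assms(2) H] by auto
  then have "integrable lborel (\<lambda>x. wD is u x \<bullet> wD is w x)" by (rule L2_inner_int)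
  then show "integrable lborel (\<lambda>x. wD is u x * wD is w x)" by simp
qed

lemma tauI_lin:
  assumes "sobolev m u" "sobolev m w"
  shows "AE x in lborel. tau_I m (\<lambda>x. s *\<^sub>R u x + t *\<^sub>R w x) (\<lambda>x. s *\<^sub>R u x + t *\<^sub>R w x) x
       = s^2 * tau_I m u u x + 2 * s * t * tau_I m u w x + t^2 * tau_I m w w x"
proof -
  have "AE x in lborel. \<forall>is\<in>{is. set is \<subseteq> (Basis::'a set) \<and> length is = m}.
      wD is (\<lambda>x. s *\<^sub>R u x + t *\<^sub>R w x) x = s *\<^sub>R wD is u x + t *\<^sub>R wD is w x"
  proof (rule AE_finite_allI[OF finite_lists_m])
    fix "is" :: "'a list" assume "is \<in> {is. set is \<subseteq> Basis \<and> length is = m}"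
    then have H: "set is \<subseteq> Basis" "length is \<le> m" by auto
    show "AE x in lborel. wD is (\<lambda>x. s *\<^sub>R u x + t *\<^sub>R w x) x = s *\<^sub>R wD is u x + t *\<^sub>R wD is w x"
      by (rule wD_lin[OF assms H])
  qed
  then show ?thesis
  proof (rule AE_mp, intro AE_I2 impI)
    fix x
    assume E: "\<forall>is\<in>{is. set is \<subseteq> (Basis::'a set) \<and> length is = m}.
      wD is (\<lambda>x. s *\<^sub>R u x + t *\<^sub>R w x) x = s *\<^sub>R wD is u x + t *\<^sub>R wD is w x"
    have "tau_I m (\<lambda>x. s *\<^sub>R u x + t *\<^sub>R w x) (\<lambda>x. s *\<^sub>R u x + t *\<^sub>R w x) x
        = (\<Sum>is\<in>{is. set is \<subseteq> Basis \<and> length is = m}. (s * wD is u x + t * wD is w x) * (s * wD is u x + t * wD is w x))"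
      unfolding tau_I_def by (rule sum.cong) (use E in auto)
    also have "\<dots> = s^2 * tau_I m u u x + 2 * s * t * tau_I m u w x + t^2 * tau_I m w w x"
      unfolding tau_I_def by (rule sum_quad)
    finally show "tau_I m (\<lambda>x. s *\<^sub>R u x + t *\<^sub>R w x) (\<lambda>x. s *\<^sub>R u x + t *\<^sub>R w x) x
       = s^2 * tau_I m u u x + 2 * s * t * tau_I m u w x + t^2 * tau_I m w w x" .
  qed
qed

lemma tauI_nn: "0 \<le> tau_I m u u x"
  unfolding tau_I_def by (intro sum_nonneg) auto

section \<open>Problem II (and III)\<close>

lemma sum_quad_inner:
  fixes a b :: "'i \<Rightarrow> 'v::real_inner"
  shows "(\<Sum>i\<in>S. (s *\<^sub>R a i + t *\<^sub>R b i) \<bullet> (s *\<^sub>R a i + t *\<^sub>R b i))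
     = s^2 * (\<Sum>i\<in>S. a i \<bullet> a i) + 2 * s * t * (\<Sum>i\<in>S. a i \<bullet> b i) + t^2 * (\<Sum>i\<in>S. b i \<bullet> b i)"
proof -
  have "\<And>i. (s *\<^sub>R a i + t *\<^sub>R b i) \<bullet> (s *\<^sub>R a i + t *\<^sub>R b i) = s^2 * (a i \<bullet> a i) + 2 * s * t * (a i \<bullet> b i) + t^2 * (b i \<bullet> b i)"
    by (simp add: power2_eq_square algebra_simps inner_add_left inner_add_right inner_commute)
  then show ?thesis by (simp add: sum.distrib sum_distrib_left)
qed

lemma tauII_int:
  fixes u w :: "'a::euclidean_space \<Rightarrow> 'a"
  assumes "sobolev 1 u" "sobolev 1 w"
  shows "integrable lborel (\<lambda>x. tau_II c0 u w x)"
  unfolding tau_II_def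
proof (rule Bochner_Integration.integrable_add)
  show "integrable lborel (\<lambda>x. \<Sum>j\<in>Basis. wD [j] u x \<bullet> wD [j] w x)"
  proof (rule Bochner_Integration.integrable_sum)
    fix j :: 'a assume "j \<in> Basis"
    then have H: "set [j] \<subseteq> Basis" "length [j] \<le> 1" by auto
    show "integrable lborel (\<lambda>x. wD [j] u x \<bullet> wD [j] w x)"
      using wD_spec[OF assms(1) H] wD_spec[OF assms(2) H] by (intro L2_inner_int) auto
  qed
  have "integrable lborel (\<lambda>x. wdiv u x \<bullet> wdiv w x)"
    using L2_wdiv[OF assms(1)] L2_wdiv[OF assms(2)] by (rule L2_inner_int)
  then have "integrable lborel (\<lambda>x. c0 * (wdiv u x \<bullet> wdiv w x))" by (rule integrable_mult_right)
  then show "integrable lborel (\<lambda>x. c0 * wdiv u x * wdiv w x)" by (simp add: mult.assoc)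
qed

lemma tauII_lin:
  fixes u w :: "'a::euclidean_space \<Rightarrow> 'a"
  assumes "sobolev 1 u" "sobolev 1 w"
  shows "AE x in lborel. tau_II c0 (\<lambda>x. s *\<^sub>R u x + t *\<^sub>R w x) (\<lambda>x. s *\<^sub>R u x + t *\<^sub>R w x) x
       = s^2 * tau_II c0 u u x + 2 * s * t * tau_II c0 u w x + t^2 * tau_II c0 w w x"
proof -
  have A1: "AE x in lborel. \<forall>j\<in>(Basis::'a set).
      wD [j] (\<lambda>x. s *\<^sub>R u x + t *\<^sub>R w x) x = s *\<^sub>R wD [j] u x + t *\<^sub>R wD [j] w x"
  proof (rule AE_finite_allI[OF finite_Basis])
    fix j :: 'a assume "j \<in> Basis"
    then have H: "set [j] \<subseteq> Basis" "length [j] \<le> 1" by auto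
    show "AE x in lborel. wD [j] (\<lambda>x. s *\<^sub>R u x + t *\<^sub>R w x) x = s *\<^sub>R wD [j] u x + t *\<^sub>R wD [j] w x"
      by (rule wD_lin[OF assms H])
  qed
  have A2: "AE x in lborel. wdiv (\<lambda>x. s *\<^sub>R u x + t *\<^sub>R w x) x = s * wdiv u x + t * wdiv w x"
    by (rule wdiv_lin[OF assms])
  show ?thesis
  proof (rule AE_mp[OF AE_conjI[OF A1 A2]], intro AE_I2 impI)
    fix x
    assume E: "(\<forall>j\<in>(Basis::'a set). wD [j] (\<lambda>x. s *\<^sub>R u x + t *\<^sub>R w x) x = s *\<^sub>R wD [j] u x + t *\<^sub>R wD [j] w x)
      \<and> wdiv (\<lambda>x. s *\<^sub>R u x + t *\<^sub>R w x) x = s * wdiv u x + t * wdiv w x"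
    have "(\<Sum>j\<in>Basis. wD [j] (\<lambda>x. s *\<^sub>R u x + t *\<^sub>R w x) x \<bullet> wD [j] (\<lambda>x. s *\<^sub>R u x + t *\<^sub>R w x) x)
        = (\<Sum>j\<in>Basis. (s *\<^sub>R wD [j] u x + t *\<^sub>R wD [j] w x) \<bullet> (s *\<^sub>R wD [j] u x + t *\<^sub>R wD [j] w x))"
      by (rule sum.cong) (use E in auto)
    also have "\<dots> = s^2 * (\<Sum>j\<in>Basis. wD [j] u x \<bullet> wD [j] u x) + 2 * s * t * (\<Sum>j\<in>Basis. wD [j] u x \<bullet> wD [j] w x)
        + t^2 * (\<Sum>j\<in>Basis. wD [j] w x \<bullet> wD [j] w x)"
      by (rule sum_quad_inner)
    finally have S: "(\<Sum>j\<in>Basis. wD [j] (\<lambda>x. s *\<^sub>R u x + t *\<^sub>R w x) x \<bullet> wD [j] (\<lambda>x. s *\<^sub>R u x + t *\<^sub>R w x) x)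
        = s^2 * (\<Sum>j\<in>Basis. wD [j] u x \<bullet> wD [j] u x) + 2 * s * t * (\<Sum>j\<in>Basis. wD [j] u x \<bullet> wD [j] w x)
        + t^2 * (\<Sum>j\<in>Basis. wD [j] w x \<bullet> wD [j] w x)" .
    have D: "c0 * wdiv (\<lambda>x. s *\<^sub>R u x + t *\<^sub>R w x) x * wdiv (\<lambda>x. s *\<^sub>R u x + t *\<^sub>R w x) x
        = s^2 * (c0 * wdiv u x * wdiv u x) + 2 * s * t * (c0 * wdiv u x * wdiv w x) + t^2 * (c0 * wdiv w x * wdiv w x)"
      using E by (simp add: power2_eq_square algebra_simps)
    show "tau_II c0 (\<lambda>x. s *\<^sub>R u x + t *\<^sub>R w x) (\<lambda>x. s *\<^sub>R u x + t *\<^sub>R w x) x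
       = s^2 * tau_II c0 u u x + 2 * s * t * tau_II c0 u w x + t^2 * tau_II c0 w w x"
      unfolding tau_II_def S D by (simp add: algebra_simps)
  qed
qed

lemma tauII_nn:
  assumes "c0 \<ge> 0"
  shows "0 \<le> tau_II c0 u u x"
  unfolding tau_II_def using assms
  by (intro add_nonneg_nonneg sum_nonneg) (auto simp: mult.assoc)

lemma tauIII_eq: "tau_III = tau_II 0"
  by (simp add: fun_eq_iff tau_III_def tau_II_def)

theorem lemma3:
  assumes "DIM('a::euclidean_space) \<ge> 2"
  shows
  "(\<forall>m::nat. m \<ge> 1 \<longrightarrow> (\<forall>C c R::real. C > 0 \<and> c > 0 \<and> R > 0 \<longrightarrow> (\<exists>C'::real.
      \<forall>(f::('a \<Rightarrow> real) \<Rightarrow> real) (u::'a \<Rightarrow> real) (a::'a) (r::real) (\<phi>::'a \<Rightarrow> real).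
        f \<in> dual_sp (V_I m) (sob_norm m) \<and> local_quasimin (V_I m) (VB_I m) (tau_I m) f C c R u
        \<and> 0 < r \<and> r \<le> R \<and> \<phi> \<in> VB_I m a r \<longrightarrow>
        \<bar>integral\<^sup>L lborel (\<lambda>x. tau_I m u \<phi> x) - f \<phi>\<bar>
          \<le> C' * r powr (real DIM('a) / 2) * sqrt (integral\<^sup>L lborel (\<lambda>x. tau_I m \<phi> \<phi> x)))))
 \<and> (\<forall>c0::real. c0 > 0 \<longrightarrow> (\<forall>C c R::real. C > 0 \<and> c > 0 \<and> R > 0 \<longrightarrow> (\<exists>C'::real.
      \<forall>(f::('a \<Rightarrow> 'a) \<Rightarrow> real) (u::'a \<Rightarrow> 'a) (a::'a) (r::real) (\<phi>::'a \<Rightarrow> 'a).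
        f \<in> dual_sp V_II (sob_norm 1) \<and> local_quasimin V_II VB_II (tau_II c0) f C c R u
        \<and> 0 < r \<and> r \<le> R \<and> \<phi> \<in> VB_II a r \<longrightarrow>
        \<bar>integral\<^sup>L lborel (\<lambda>x. tau_II c0 u \<phi> x) - f \<phi>\<bar>
          \<le> C' * r powr (real DIM('a) / 2) * sqrt (integral\<^sup>L lborel (\<lambda>x. tau_II c0 \<phi> \<phi> x)))))
 \<and> (\<forall>C c R::real. C > 0 \<and> c > 0 \<and> R > 0 \<longrightarrow> (\<exists>C'::real.
      \<forall>(f::('a \<Rightarrow> 'a) \<Rightarrow> real) (u::'a \<Rightarrow> 'a) (a::'a) (r::real) (\<phi>::'a \<Rightarrow> 'a).
        f \<in> dual_sp V_III (sob_norm 1) \<and> local_quasimin V_III VB_III tau_III f C c R u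
        \<and> 0 < r \<and> r \<le> R \<and> \<phi> \<in> VB_III a r \<longrightarrow>
        \<bar>integral\<^sup>L lborel (\<lambda>x. tau_III u \<phi> x) - f \<phi>\<bar>
          \<le> C' * r powr (real DIM('a) / 2) * sqrt (integral\<^sup>L lborel (\<lambda>x. tau_III \<phi> \<phi> x))))"
proof (intro conjI allI impI)
  fix m :: nat and C c R :: real
  assume m: "m \<ge> 1" and pos: "C > 0 \<and> c > 0 \<and> R > 0"
  show "\<exists>C'::real.
      \<forall>(f::('a \<Rightarrow> real) \<Rightarrow> real) (u::'a \<Rightarrow> real) (a::'a) (r::real) (\<phi>::'a \<Rightarrow> real).
        f \<in> dual_sp (V_I m) (sob_norm m) \<and> local_quasimin (V_I m) (VB_I m) (tau_I m) f C c R u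
        \<and> 0 < r \<and> r \<le> R \<and> \<phi> \<in> VB_I m a r \<longrightarrow>
        \<bar>integral\<^sup>L lborel (\<lambda>x. tau_I m u \<phi> x) - f \<phi>\<bar>
          \<le> C' * r powr (real DIM('a) / 2) * sqrt (integral\<^sup>L lborel (\<lambda>x. tau_I m \<phi> \<phi> x))"
  proof (rule exI[of _ "Kc C c R DIM('a)"], intro allI impI, elim conjE)
    fix f :: "('a \<Rightarrow> real) \<Rightarrow> real" and u :: "'a \<Rightarrow> real" and a :: 'a and r :: real and \<phi> :: "'a \<Rightarrow> real"
    assume fd: "f \<in> dual_sp (V_I m) (sob_norm m)" and LQ: "local_quasimin (V_I m) (VB_I m) (tau_I m) f C c R u"
      and r: "0 < r" "r \<le> R" and \<phi>B: "\<phi> \<in> VB_I m a r"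
    have su: "sobolev m u" using LQ by (simp add: local_quasimin_def V_I_def)
    have H0\<phi>: "\<phi> \<in> H0 m (ball a r)" using \<phi>B by (simp add: VB_I_def)
    have s\<phi>: "sobolev m \<phi>" using H0\<phi> by (simp add: H0_def)
    have F: "integral\<^sup>L lborel (\<lambda>x. tau_I m (\<lambda>x. 1 *\<^sub>R u x + t *\<^sub>R \<phi> x) (\<lambda>x. 1 *\<^sub>R u x + t *\<^sub>R \<phi> x) x)
               = integral\<^sup>L lborel (\<lambda>x. tau_I m u u x) + 2 * t * integral\<^sup>L lborel (\<lambda>x. tau_I m u \<phi> x)
                 + t^2 * integral\<^sup>L lborel (\<lambda>x. tau_I m \<phi> \<phi> x)"
      "A \<in> sets borel \<Longrightarrow> (LINT x:A|lborel. tau_I m (\<lambda>x. (1 *\<^sub>R u x + t *\<^sub>R \<phi> x) - u x) (\<lambda>x. (1 *\<^sub>R u x + t *\<^sub>R \<phi> x) - u x) x)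
          \<le> t^2 * integral\<^sup>L lborel (\<lambda>x. tau_I m \<phi> \<phi> x)"
      "0 \<le> integral\<^sup>L lborel (\<lambda>x. tau_I m \<phi> \<phi> x)" for t and A :: "'a set"
      by (rule vfacts[where tau="tau_I m", OF tauI_int tauI_lin tauI_nn su s\<phi>], assumption+)+
    show "\<bar>integral\<^sup>L lborel (\<lambda>x. tau_I m u \<phi> x) - f \<phi>\<bar>
          \<le> Kc C c R DIM('a) * r powr (real DIM('a) / 2) * sqrt (integral\<^sup>L lborel (\<lambda>x. tau_I m \<phi> \<phi> x))"
    proof (rule schema[OF LQ _ fd r])
      show "\<phi> \<in> V_I m" using s\<phi> by (simp add: V_I_def)
      show "C > 0" "c > 0" "R > 0" using pos by auto
      show "(\<lambda>x. 1 *\<^sub>R u x + t *\<^sub>R \<phi> x) \<in> V_I m" for t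
        using sob_lin[OF su s\<phi>, of 1 t] by (simp add: V_I_def)
      show "(\<lambda>x. (1 *\<^sub>R u x + t *\<^sub>R \<phi> x) - u x) \<in> VB_I m a r" for t
      proof -
        have "(\<lambda>x. (1 *\<^sub>R u x + t *\<^sub>R \<phi> x) - u x) = (\<lambda>x. t *\<^sub>R \<phi> x)" by simp
        then show ?thesis using H0_scale[OF H0\<phi>, of t] by (simp add: VB_I_def)
      qed
      show "(LINT x:ball a r|lborel. tau_I m (\<lambda>x. (1 *\<^sub>R u x + t *\<^sub>R \<phi> x) - u x) (\<lambda>x. (1 *\<^sub>R u x + t *\<^sub>R \<phi> x) - u x) x)
          \<le> t^2 * integral\<^sup>L lborel (\<lambda>x. tau_I m \<phi> \<phi> x)" for t
        by (rule F(2)) simp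
    qed (rule F(1), rule F(3))
  qed
next
  fix c0 C c R :: real
  assume c0: "c0 > 0" and pos: "C > 0 \<and> c > 0 \<and> R > 0"
  show "\<exists>C'::real.
      \<forall>(f::('a \<Rightarrow> 'a) \<Rightarrow> real) (u::'a \<Rightarrow> 'a) (a::'a) (r::real) (\<phi>::'a \<Rightarrow> 'a).
        f \<in> dual_sp V_II (sob_norm 1) \<and> local_quasimin V_II VB_II (tau_II c0) f C c R u
        \<and> 0 < r \<and> r \<le> R \<and> \<phi> \<in> VB_II a r \<longrightarrow>
        \<bar>integral\<^sup>L lborel (\<lambda>x. tau_II c0 u \<phi> x) - f \<phi>\<bar>
          \<le> C' * r powr (real DIM('a) / 2) * sqrt (integral\<^sup>L lborel (\<lambda>x. tau_II c0 \<phi> \<phi> x))"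
  proof (rule exI[of _ "Kc C c R DIM('a)"], intro allI impI, elim conjE)
    fix f :: "('a \<Rightarrow> 'a) \<Rightarrow> real" and u :: "'a \<Rightarrow> 'a" and a :: 'a and r :: real and \<phi> :: "'a \<Rightarrow> 'a"
    assume fd: "f \<in> dual_sp V_II (sob_norm 1)" and LQ: "local_quasimin V_II VB_II (tau_II c0) f C c R u"
      and r: "0 < r" "r \<le> R" and \<phi>B: "\<phi> \<in> VB_II a r"
    have su: "sobolev 1 u" using LQ by (simp add: local_quasimin_def V_II_def)
    have H0\<phi>: "\<phi> \<in> H0 1 (ball a r)" using \<phi>B by (simp add: VB_II_def)
    have s\<phi>: "sobolev 1 \<phi>" using H0\<phi> by (simp add: H0_def)
    have nn: "\<And>u x. sobolev 1 u \<Longrightarrow> 0 \<le> tau_II c0 u u x" using c0 by (intro tauII_nn) simp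
    have F: "integral\<^sup>L lborel (\<lambda>x. tau_II c0 (\<lambda>x. 1 *\<^sub>R u x + t *\<^sub>R \<phi> x) (\<lambda>x. 1 *\<^sub>R u x + t *\<^sub>R \<phi> x) x)
               = integral\<^sup>L lborel (\<lambda>x. tau_II c0 u u x) + 2 * t * integral\<^sup>L lborel (\<lambda>x. tau_II c0 u \<phi> x)
                 + t^2 * integral\<^sup>L lborel (\<lambda>x. tau_II c0 \<phi> \<phi> x)"
      "A \<in> sets borel \<Longrightarrow> (LINT x:A|lborel. tau_II c0 (\<lambda>x. (1 *\<^sub>R u x + t *\<^sub>R \<phi> x) - u x) (\<lambda>x. (1 *\<^sub>R u x + t *\<^sub>R \<phi> x) - u x) x)
          \<le> t^2 * integral\<^sup>L lborel (\<lambda>x. tau_II c0 \<phi> \<phi> x)"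
      "0 \<le> integral\<^sup>L lborel (\<lambda>x. tau_II c0 \<phi> \<phi> x)" for t and A :: "'a set"
      by (rule vfacts[where tau="tau_II c0", OF tauII_int tauII_lin nn su s\<phi>], assumption+)+
    show "\<bar>integral\<^sup>L lborel (\<lambda>x. tau_II c0 u \<phi> x) - f \<phi>\<bar>
          \<le> Kc C c R DIM('a) * r powr (real DIM('a) / 2) * sqrt (integral\<^sup>L lborel (\<lambda>x. tau_II c0 \<phi> \<phi> x))"
    proof (rule schema[OF LQ _ fd r])
      show "\<phi> \<in> V_II" using s\<phi> by (simp add: V_II_def)
      show "C > 0" "c > 0" "R > 0" using pos by auto
      show "(\<lambda>x. 1 *\<^sub>R u x + t *\<^sub>R \<phi> x) \<in> V_II" for t
        using sob_lin[OF su s\<phi>, of 1 t] by (simp add: V_II_def)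
      show "(\<lambda>x. (1 *\<^sub>R u x + t *\<^sub>R \<phi> x) - u x) \<in> VB_II a r" for t
      proof -
        have "(\<lambda>x. (1 *\<^sub>R u x + t *\<^sub>R \<phi> x) - u x) = (\<lambda>x. t *\<^sub>R \<phi> x)" by simp
        then show ?thesis using H0_scale[OF H0\<phi>, of t] by (simp add: VB_II_def)
      qed
      show "(LINT x:ball a r|lborel. tau_II c0 (\<lambda>x. (1 *\<^sub>R u x + t *\<^sub>R \<phi> x) - u x) (\<lambda>x. (1 *\<^sub>R u x + t *\<^sub>R \<phi> x) - u x) x)
          \<le> t^2 * integral\<^sup>L lborel (\<lambda>x. tau_II c0 \<phi> \<phi> x)" for t
        by (rule F(2)) simp
    qed (rule F(1), rule F(3))
  qed
next
  fix C c R :: real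
  assume pos: "C > 0 \<and> c > 0 \<and> R > 0"
  show "\<exists>C'::real.
      \<forall>(f::('a \<Rightarrow> 'a) \<Rightarrow> real) (u::'a \<Rightarrow> 'a) (a::'a) (r::real) (\<phi>::'a \<Rightarrow> 'a).
        f \<in> dual_sp V_III (sob_norm 1) \<and> local_quasimin V_III VB_III tau_III f C c R u
        \<and> 0 < r \<and> r \<le> R \<and> \<phi> \<in> VB_III a r \<longrightarrow>
        \<bar>integral\<^sup>L lborel (\<lambda>x. tau_III u \<phi> x) - f \<phi>\<bar>
          \<le> C' * r powr (real DIM('a) / 2) * sqrt (integral\<^sup>L lborel (\<lambda>x. tau_III \<phi> \<phi> x))"
    unfolding tauIII_eq
  proof (rule exI[of _ "Kc C c R DIM('a)"], intro allI impI, elim conjE)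
    fix f :: "('a \<Rightarrow> 'a) \<Rightarrow> real" and u :: "'a \<Rightarrow> 'a" and a :: 'a and r :: real and \<phi> :: "'a \<Rightarrow> 'a"
    assume fd: "f \<in> dual_sp V_III (sob_norm 1)" and LQ: "local_quasimin V_III VB_III (tau_II 0) f C c R u"
      and r: "0 < r" "r \<le> R" and \<phi>B: "\<phi> \<in> VB_III a r"
    have su: "sobolev 1 u" and du: "AE x in lborel. wdiv u x = 0"
      using LQ by (simp_all add: local_quasimin_def V_III_def)
    have H0\<phi>: "\<phi> \<in> H0 1 (ball a r)" and d\<phi>: "AE x in lborel. wdiv \<phi> x = 0"
      using \<phi>B by (simp_all add: VB_III_def)
    have s\<phi>: "sobolev 1 \<phi>" using H0\<phi> by (simp add: H0_def)
    have nn: "\<And>u x. sobolev 1 u \<Longrightarrow> 0 \<le> tau_II 0 u u x" by (intro tauII_nn) simp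
    have F: "integral\<^sup>L lborel (\<lambda>x. tau_II 0 (\<lambda>x. 1 *\<^sub>R u x + t *\<^sub>R \<phi> x) (\<lambda>x. 1 *\<^sub>R u x + t *\<^sub>R \<phi> x) x)
               = integral\<^sup>L lborel (\<lambda>x. tau_II 0 u u x) + 2 * t * integral\<^sup>L lborel (\<lambda>x. tau_II 0 u \<phi> x)
                 + t^2 * integral\<^sup>L lborel (\<lambda>x. tau_II 0 \<phi> \<phi> x)"
      "A \<in> sets borel \<Longrightarrow> (LINT x:A|lborel. tau_II 0 (\<lambda>x. (1 *\<^sub>R u x + t *\<^sub>R \<phi> x) - u x) (\<lambda>x. (1 *\<^sub>R u x + t *\<^sub>R \<phi> x) - u x) x)
          \<le> t^2 * integral\<^sup>L lborel (\<lambda>x. tau_II 0 \<phi> \<phi> x)"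
      "0 \<le> integral\<^sup>L lborel (\<lambda>x. tau_II 0 \<phi> \<phi> x)" for t and A :: "'a set"
      by (rule vfacts[where tau="tau_II 0", OF tauII_int tauII_lin nn su s\<phi>], assumption+)+
    show "\<bar>integral\<^sup>L lborel (\<lambda>x. tau_II 0 u \<phi> x) - f \<phi>\<bar>
          \<le> Kc C c R DIM('a) * r powr (real DIM('a) / 2) * sqrt (integral\<^sup>L lborel (\<lambda>x. tau_II 0 \<phi> \<phi> x))"
    proof (rule schema[OF LQ _ fd r])
      show "\<phi> \<in> V_III" using s\<phi> d\<phi> by (simp add: V_III_def)
      show "C > 0" "c > 0" "R > 0" using pos by auto
      show "(\<lambda>x. 1 *\<^sub>R u x + t *\<^sub>R \<phi> x) \<in> V_III" for t
      proof -
        have "AE x in lborel. wdiv (\<lambda>x. 1 *\<^sub>R u x + t *\<^sub>R \<phi> x) x = 1 * wdiv u x + t * wdiv \<phi> x"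
          by (rule wdiv_lin[OF su s\<phi>])
        then have "AE x in lborel. wdiv (\<lambda>x. 1 *\<^sub>R u x + t *\<^sub>R \<phi> x) x = 0"
          using du d\<phi> by eventually_elim simp
        then show ?thesis using sob_lin[OF su s\<phi>, of 1 t] by (simp add: V_III_def)
      qed
      show "(\<lambda>x. (1 *\<^sub>R u x + t *\<^sub>R \<phi> x) - u x) \<in> VB_III a r" for t
      proof -
        have e1: "(\<lambda>x. (1 *\<^sub>R u x + t *\<^sub>R \<phi> x) - u x) = (\<lambda>x. t *\<^sub>R \<phi> x)" by simp
        have e2: "(\<lambda>x. 0 *\<^sub>R \<phi> x + t *\<^sub>R \<phi> x) = (\<lambda>x. t *\<^sub>R \<phi> x)" by simp
        have "AE x in lborel. wdiv (\<lambda>x. 0 *\<^sub>R \<phi> x + t *\<^sub>R \<phi> x) x = 0 * wdiv \<phi> x + t * wdiv \<phi> x"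
          by (rule wdiv_lin[OF s\<phi> s\<phi>])
        then have "AE x in lborel. wdiv (\<lambda>x. t *\<^sub>R \<phi> x) x = 0"
          using d\<phi> unfolding e2 by eventually_elim simp
        then show ?thesis unfolding e1 using H0_scale[OF H0\<phi>, of t] by (simp add: VB_III_def)
      qed
      show "(LINT x:ball a r|lborel. tau_II 0 (\<lambda>x. (1 *\<^sub>R u x + t *\<^sub>R \<phi> x) - u x) (\<lambda>x. (1 *\<^sub>R u x + t *\<^sub>R \<phi> x) - u x) x)
          \<le> t^2 * integral\<^sup>L lborel (\<lambda>x. tau_II 0 \<phi> \<phi> x)" for t
        by (rule F(2)) simp
    qed (rule F(1), rule F(3))
  qed
qed

end
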